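(* Let $m\ge 1$ be an integer. Then \[ \sum_{\lambda \vdash m} x^{v(\lambda)}\,y^{v(\lambda')}\,q^{d(\lambda)}\,t^{d(\lambda')}\,I_\lambda=(x+y)^{\lfloor m/2\rfloor}, \] as polynomials in the indeterminates $x,y,q,t$.
   Context: Partitions are identified with their Young diagrams; $\lambda'$ denotes the conjugate partition and $l(\lambda)$ the number of nonzero parts. Define $v(\lambda)=\sum_{i=1}^{l(\lambda)}\lfloor \lambda_i/2\rfloor$ and $d(\lambda)=\sum_{i=1}^{\lfloor l(\lambda)/2\rfloor}\lfloor \lambda_{2i}/2\rfloor$ (one has $d(\lambda)=d(\lambda')$). For a standard Young tableau $T$ of shape $\lambda\vdash m$, its reading word is obtained by reading the entries of the first (top) row from left to right, then the second row from left to right, and so on; this is a permutation of $[m]$, and $\mathrm{sign}(T)$ is the sign of this permutation. The sign-imbalance of $\lambda$ is $I_\lambda=\sum_T \mathrm{sign}(T)$, the sum over all standard Young tableaux $T$ of shape $\lambda$. *)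

theory Defs
  imports Main "HOL-Combinatorics.Permutations"
begin

text \<open>A partition is represented as the list of its nonzero parts, in weakly decreasing order.
  Rows and columns of Young diagrams are 0-indexed; cell (i,j) = row i, column j.\<close>

definition is_partition :: "nat list \<Rightarrow> bool" where
  "is_partition lam \<longleftrightarrow> sorted_wrt (\<ge>) lam \<and> (\<forall>p\<in>set lam. 0 < p)"

definition partitions :: "nat \<Rightarrow> nat list set" where
  "partitions m = {lam. is_partition lam \<and> sum_list lam = m}"

definition conj_part :: "nat list \<Rightarrow> nat list" where
  "conj_part lam = map (\<lambda>j. length (filter (\<lambda>p. j < p) lam)) [0..<(if lam = [] then 0 else hd lam)]"

definition v_stat :: "nat list \<Rightarrow> nat" where
  "v_stat lam = (\<Sum>i<length lam. lam ! i div 2)"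

text \<open>d(lam) = sum over i = 1..floor(l/2) of floor(lam_{2i}/2); lam_{2i} (1-indexed) is lam ! (2i-1).\<close>
definition d_stat :: "nat list \<Rightarrow> nat" where
  "d_stat lam = (\<Sum>i\<in>{1..length lam div 2}. lam ! (2 * i - 1) div 2)"

definition cells :: "nat list \<Rightarrow> (nat \<times> nat) set" where
  "cells lam = {(i, j). i < length lam \<and> j < lam ! i}"

definition SYT :: "nat list \<Rightarrow> (nat \<times> nat \<Rightarrow> nat) set" where
  "SYT lam = {T. bij_betw T (cells lam) {1..sum_list lam}
     \<and> (\<forall>c. c \<notin> cells lam \<longrightarrow> T c = 0)
     \<and> (\<forall>i j. (i, Suc j) \<in> cells lam \<longrightarrow> T (i, j) < T (i, Suc j))
     \<and> (\<forall>i j. (Suc i, j) \<in> cells lam \<longrightarrow> T (i, j) < T (Suc i, j))}"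

definition reading_word :: "nat list \<Rightarrow> (nat \<times> nat \<Rightarrow> nat) \<Rightarrow> nat list" where
  "reading_word lam T = concat (map (\<lambda>i. map (\<lambda>j. T (i, j)) [0..<lam ! i]) [0..<length lam])"

definition word_perm :: "nat list \<Rightarrow> nat \<Rightarrow> nat" where
  "word_perm w = (\<lambda>k. if 1 \<le> k \<and> k \<le> length w then w ! (k - 1) else k)"

definition tableau_sign :: "nat list \<Rightarrow> (nat \<times> nat \<Rightarrow> nat) \<Rightarrow> int" where
  "tableau_sign lam T = sign (word_perm (reading_word lam T))"

definition sign_imbalance :: "nat list \<Rightarrow> int" where
  "sign_imbalance lam = (\<Sum>T\<in>SYT lam. tableau_sign lam T)"

end

theory Submission
  imports Defs
begin


type_synonym pt = "nat \<Rightarrow> nat"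

definition Par :: "nat \<Rightarrow> pt set" where
  "Par n = {p. (\<forall>i. p (Suc i) \<le> p i) \<and> (\<forall>i\<ge>n. p i = 0) \<and> sum p {..<n} = n}"
definition addb :: "pt \<Rightarrow> nat \<Rightarrow> bool" where "addb p i \<longleftrightarrow> i = 0 \<or> p i < p (i - 1)"
definition remb :: "pt \<Rightarrow> nat \<Rightarrow> bool" where "remb p r \<longleftrightarrow> p (Suc r) < p r"
definition inc :: "pt \<Rightarrow> nat \<Rightarrow> pt" where "inc p i = p(i := Suc (p i))"
definition dec :: "pt \<Rightarrow> nat \<Rightarrow> pt" where "dec p i = p(i := p i - 1)"
definition sg :: "nat \<Rightarrow> pt \<Rightarrow> nat \<Rightarrow> int" where "sg K p i = (-1) ^ sum p {Suc i..<K}"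

lemma sum_upd:
  assumes "finite A" "i \<in> A"
  shows "sum (p(i := a)) A + p i = sum p A + (a::nat)"
proof -
  have "sum (p(i := a)) A = a + sum (p(i := a)) (A - {i})" using assms by (simp add: sum.remove)
  also have "sum (p(i := a)) (A - {i}) = sum p (A - {i})" by (rule sum.cong) auto
  finally show ?thesis using assms by (simp add: sum.remove)
qed

lemma Par_dec: "p \<in> Par n \<Longrightarrow> i \<le> j \<Longrightarrow> p j \<le> p i"
  unfolding Par_def using lift_Suc_antimono_le[of p] by blast

lemma Par_zero: "p \<in> Par n \<Longrightarrow> n \<le> i \<Longrightarrow> p i = 0"
  unfolding Par_def by blast

lemma Par_pos: "p \<in> Par n \<Longrightarrow> 0 < p i \<Longrightarrow> i < n"
  using Par_zero[of p n i] by (cases "n \<le> i") auto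

lemma Par_sum: "p \<in> Par n \<Longrightarrow> sum p {..<n} = n"
  unfolding Par_def by blast

lemma Par_le: "p \<in> Par n \<Longrightarrow> p i \<le> n"
proof (cases "i < n")
  case True
  assume "p \<in> Par n"
  then have "p i \<le> sum p {..<n}" using True by (intro member_le_sum) auto
  then show ?thesis using Par_sum[OF \<open>p \<in> Par n\<close>] by simp
next
  case False
  assume "p \<in> Par n" then show ?thesis using Par_zero[of p n i] False by simp
qed

lemma finite_Par: "finite (Par n)"
proof -
  have inj: "inj_on (\<lambda>p. map p [0..<n]) (Par n)"
  proof (rule inj_onI)
    fix p q assume p: "p \<in> Par n" and q: "q \<in> Par n" and e: "map p [0..<n] = map q [0..<n]"
    show "p = q"
    proof
      fix i show "p i = q i"
      proof (cases "i < n")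
        case True then show ?thesis using e by (metis add_0 diff_zero nth_map_upt)
      next
        case False then show ?thesis using Par_zero[OF p] Par_zero[OF q] by simp
      qed
    qed
  qed
  have "(\<lambda>p. map p [0..<n]) ` Par n \<subseteq> {xs. set xs \<subseteq> {..n} \<and> length xs = n}"
    using Par_le by fastforce
  then have "finite ((\<lambda>p. map p [0..<n]) ` Par n)"
    by (rule finite_subset) (rule finite_lists_length_eq, simp)
  then show ?thesis using finite_imageD inj by blast
qed

lemma all_one:
  assumes "\<forall>i<N. (1::nat) \<le> f i" "sum f {..<N} = N" "j < N"
  shows "f j = 1"
proof (rule ccontr)
  assume "f j \<noteq> 1"
  then have "2 \<le> f j" using assms(1,3) by fastforce
  have "sum f {..<N} = f j + sum f ({..<N} - {j})"
    using assms(3) by (simp add: sum.remove)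
  moreover have "sum f ({..<N} - {j}) \<ge> sum (\<lambda>_. 1) ({..<N} - {j})"
    using assms(1) by (intro sum_mono) auto
  moreover have "sum (\<lambda>_. (1::nat)) ({..<N} - {j}) = N - 1" using assms(3) by simp
  ultimately show False using assms \<open>2 \<le> f j\<close> by linarith
qed

lemma dec_Par:
  assumes p: "p \<in> Par (Suc n)" and r: "remb p r"
  shows "dec p r \<in> Par n"
proof -
  have rpos: "0 < p r" using r unfolding remb_def by simp
  have rlt: "r < Suc n" using Par_pos[OF p rpos] .
  have mono: "\<forall>i. dec p r (Suc i) \<le> dec p r i"
  proof
    fix i
    have a: "\<forall>j. p (Suc j) \<le> p j" using p unfolding Par_def by blast
    show "dec p r (Suc i) \<le> dec p r i" using a[rule_format, of i] r unfolding dec_def remb_def by auto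
  qed
  have zn: "p n = 0 \<or> r = n"
  proof (rule ccontr)
    assume "\<not> (p n = 0 \<or> r = n)"
    then have pn: "0 < p n" and rn: "r \<noteq> n" by auto
    have "\<forall>i<Suc n. 1 \<le> p i"
    proof (intro allI impI)
      fix i assume "i < Suc n" then have "p n \<le> p i" using Par_dec[OF p] by simp
      then show "1 \<le> p i" using pn by simp
    qed
    then have "\<forall>j<Suc n. p j = 1" using all_one Par_sum[OF p] by blast
    then show False using r rn rlt unfolding remb_def by auto
  qed
  have zero: "\<forall>i\<ge>n. dec p r i = 0"
  proof (intro allI impI)
    fix i assume "n \<le> i"
    show "dec p r i = 0"
    proof (cases "i = n")
      case True
      then show ?thesis
      proof (cases "r = n")
        case True
        have "p n \<le> 1"
        proof (rule ccontr)
          assume "\<not> p n \<le> 1"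
          have "\<forall>i<Suc n. 1 \<le> p i"
          proof (intro allI impI)
            fix i assume "i < Suc n" then have "p n \<le> p i" using Par_dec[OF p] by simp
            then show "1 \<le> p i" using \<open>\<not> p n \<le> 1\<close> by simp
          qed
          then have "p n = 1" using all_one Par_sum[OF p] by blast
          then show False using \<open>\<not> p n \<le> 1\<close> by simp
        qed
        then show ?thesis using True \<open>i = n\<close> unfolding dec_def by simp
      next
        case False then show ?thesis using zn \<open>i = n\<close> unfolding dec_def by simp
      qed
    next
      case False
      then have "Suc n \<le> i" using \<open>n \<le> i\<close> by simp
      then show ?thesis using Par_zero[OF p] unfolding dec_def by simp
    qed
  qed
  have "sum (dec p r) {..<Suc n} = sum p {..<Suc n} - 1"
  proof -
    have "sum p {..<Suc n} = sum (dec p r) {..<Suc n} + 1"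
      using rlt rpos sum_upd[of "{..<Suc n}" r p "p r - 1"] unfolding dec_def by simp
    then show ?thesis by simp
  qed
  then have "sum (dec p r) {..<n} = n"
    using zero Par_sum[OF p] by simp
  then show ?thesis using mono zero unfolding Par_def by blast
qed

lemma addb_le: "p \<in> Par n \<Longrightarrow> addb p i \<Longrightarrow> i \<le> n"
  unfolding addb_def using Par_pos[of p n "i - 1"] by (cases i) auto

lemma inc_Par:
  assumes p: "p \<in> Par n" and a: "addb p i"
  shows "inc p i \<in> Par (Suc n)"
proof -
  have il: "i \<le> n" using addb_le[OF p a] .
  have mono: "\<forall>j. inc p i (Suc j) \<le> inc p i j"
  proof
    fix j
    have m: "\<forall>j. p (Suc j) \<le> p j" using p unfolding Par_def by blast
    show "inc p i (Suc j) \<le> inc p i j" using m[rule_format, of j] a unfolding inc_def addb_def by auto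
  qed
  have zero: "\<forall>j\<ge>Suc n. inc p i j = 0" using il Par_zero[OF p] unfolding inc_def by auto
  have "sum (inc p i) {..<Suc n} = sum p {..<Suc n} + 1"
    using il sum_upd[of "{..<Suc n}" i p "Suc (p i)"] unfolding inc_def by simp
  also have "\<dots> = Suc n" using Par_sum[OF p] Par_zero[OF p, of n] by simp
  finally show ?thesis using mono zero unfolding Par_def by blast
qed

lemma remb_inc: "p \<in> Par n \<Longrightarrow> remb (inc p i) i"
  unfolding remb_def inc_def Par_def by (auto simp: le_imp_less_Suc)

lemma dec_inc[simp]: "dec (inc p i) i = p"
  unfolding dec_def inc_def by auto

lemma addb_dec: "p \<in> Par n \<Longrightarrow> remb p r \<Longrightarrow> addb (dec p r) r"
  unfolding addb_def remb_def dec_def Par_def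
  by (cases r) (auto, metis Suc_le_eq Suc_pred diff_Suc_1 le_less_trans less_nat_zero_code nat_neq_iff)

lemma inc_dec: "0 < p r \<Longrightarrow> inc (dec p r) r = p"
  unfolding dec_def inc_def by auto

lemma TR:
  assumes "n < K"
  shows "(\<Sum>l\<in>Par (Suc n). \<Sum>r<K. if remb l r then H l r else 0)
       = (\<Sum>m\<in>Par n. \<Sum>i<K. if addb m i then H (inc m i) i else (0::'a::comm_monoid_add))"
proof -
  let ?SL = "{a \<in> Par (Suc n) \<times> {..<K}. remb (fst a) (snd a)}"
  let ?SR = "{b \<in> Par n \<times> {..<K}. addb (fst b) (snd b)}"
  have L: "(\<Sum>l\<in>Par (Suc n). \<Sum>r<K. if remb l r then H l r else 0) = (\<Sum>a\<in>?SL. H (fst a) (snd a))"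
    by (simp add: sum.cartesian_product sum.inter_filter finite_Par case_prod_beta)
  have R: "(\<Sum>m\<in>Par n. \<Sum>i<K. if addb m i then H (inc m i) i else 0) = (\<Sum>b\<in>?SR. H (inc (fst b) (snd b)) (snd b))"
    by (simp add: sum.cartesian_product sum.inter_filter finite_Par case_prod_beta)
  have "(\<Sum>a\<in>?SL. H (fst a) (snd a)) = (\<Sum>b\<in>?SR. H (inc (fst b) (snd b)) (snd b))"
  proof (rule sum.reindex_bij_witness[where i = "\<lambda>b. (inc (fst b) (snd b), snd b)" and j = "\<lambda>a. (dec (fst a) (snd a), snd a)"])
    fix a assume a: "a \<in> ?SL"
    then have pos: "0 < fst a (snd a)" unfolding remb_def by auto
    note id = inc_dec[of "fst a" "snd a", OF pos]
    show "(inc (fst (dec (fst a) (snd a), snd a)) (snd (dec (fst a) (snd a), snd a)), snd (dec (fst a) (snd a), snd a)) = a"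
      using id by (cases a) auto
    show "(dec (fst a) (snd a), snd a) \<in> ?SR"
      using a dec_Par addb_dec by auto
    show "H (inc (fst (dec (fst a) (snd a), snd a)) (snd (dec (fst a) (snd a), snd a))) (snd (dec (fst a) (snd a), snd a)) = H (fst a) (snd a)"
      using id by simp
  next
    fix b assume b: "b \<in> ?SR"
    show "(dec (fst (inc (fst b) (snd b), snd b)) (snd (inc (fst b) (snd b), snd b)), snd (inc (fst b) (snd b), snd b)) = b"
      by (cases b) auto
    show "(inc (fst b) (snd b), snd b) \<in> ?SL"
      using b inc_Par remb_inc by auto
  qed
  then show ?thesis using L R by simp
qed

lemma sg_inc: "j < K \<Longrightarrow> sg K (inc p j) i = (if i < j then - sg K p i else sg K p i)"
proof (cases "i < j")
  case True
  assume "j < K"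
  then have "j \<in> {Suc i..<K}" using True by auto
  then have "sum (inc p j) {Suc i..<K} = Suc (sum p {Suc i..<K})"
    using sum_upd[of "{Suc i..<K}" j p "Suc (p j)"] unfolding inc_def by simp
  then show ?thesis using True unfolding sg_def by simp
next
  case False
  then have "sum (inc p j) {Suc i..<K} = sum p {Suc i..<K}"
    unfolding inc_def by (intro sum.cong) auto
  then show ?thesis using False unfolding sg_def by simp
qed

lemma sg_dec: "j < K \<Longrightarrow> 0 < p j \<Longrightarrow> sg K (dec p j) i = (if i < j then - sg K p i else sg K p i)"
  using sg_inc[of j K "dec p j" i] inc_dec[of p j] by (auto split: if_splits)

lemma sg_inc_same[simp]: "sg K (inc p i) i = sg K p i"
  unfolding sg_def inc_def by (intro arg_cong[where f="\<lambda>s. (-1::int)^s"] sum.cong) auto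

lemma sg_dec_same[simp]: "sg K (dec p i) i = sg K p i"
  unfolding sg_def dec_def by (intro arg_cong[where f="\<lambda>s. (-1::int)^s"] sum.cong) auto

lemma sg_sq[simp]: "sg K p i * sg K p i = 1"
  unfolding sg_def by (simp add: minus_one_power_iff)

lemma phi:
  assumes "\<forall>i. p (Suc i) \<le> p i" "p K' = 0"
  shows "(\<Sum>i<Suc K'. if addb p i then (-1::int)^i else 0) + (\<Sum>r<Suc K'. if remb p r then (-1)^r else 0) = 1"
proof -
  have "(\<Sum>i<Suc K'. if addb p i then (-1::int)^i else 0) = 1 + (\<Sum>r<K'. if addb p (Suc r) then (-1)^(Suc r) else 0)"
    by (simp only: sum.lessThan_Suc_shift) (simp add: addb_def)
  also have "(\<Sum>r<K'. if addb p (Suc r) then (-1::int)^(Suc r) else 0) = (\<Sum>r<K'. - (if remb p r then (-1)^r else 0))"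
    by (intro sum.cong) (auto simp: addb_def remb_def)
  finally have a: "(\<Sum>i<Suc K'. if addb p i then (-1::int)^i else 0) = 1 - (\<Sum>r<K'. if remb p r then (-1)^r else 0)"
    by (simp add: sum_negf)
  have "\<not> remb p K'" using assms unfolding remb_def by (metis not_less_zero le_zero_eq)
  then have b: "(\<Sum>r<Suc K'. if remb p r then (-1::int)^r else 0) = (\<Sum>r<K'. if remb p r then (-1)^r else 0)"
    by simp
  show ?thesis using a b by simp
qed

lemma diag_split:
  "(\<Sum>i<(K::nat). \<Sum>r<K. f i r) = (\<Sum>i<K. f i i) + (\<Sum>i<K. \<Sum>r<K. if r = i then 0 else (f i r::'a::comm_monoid_add))"
proof -
  have "\<And>i. i < K \<Longrightarrow> (\<Sum>r<K. f i r) = f i i + (\<Sum>r<K. if r = i then 0 else f i r)"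
  proof -
    fix i assume "i < K"
    have "(\<Sum>r<K. f i r) = (\<Sum>r<K. (if r = i then f i r else 0) + (if r = i then 0 else f i r))"
      by (intro sum.cong) auto
    also have "\<dots> = (\<Sum>r<K. if r = i then f i r else 0) + (\<Sum>r<K. if r = i then 0 else f i r)"
      by (rule sum.distrib)
    also have "(\<Sum>r<K. if r = i then f i r else 0) = f i i"
      using \<open>i < K\<close> by simp
    finally show "(\<Sum>r<K. f i r) = f i i + (\<Sum>r<K. if r = i then 0 else f i r)" .
  qed
  then show ?thesis by (simp add: sum.distrib)
qed


lemma antisym_sum:
  assumes "\<And>i j. i < K \<Longrightarrow> j < K \<Longrightarrow> Z i j = - Z j i" "\<And>i. i < K \<Longrightarrow> Z i i = 0"
  shows "(\<Sum>i<(K::nat). \<Sum>j<K. Z i j) = (0::'a::ab_group_add)"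
  using assms
proof (induction K)
  case 0 then show ?case by simp
next
  case (Suc K)
  have IH: "(\<Sum>i<K. \<Sum>j<K. Z i j) = 0"
    by (rule Suc.IH) (meson Suc.prems less_SucI)+
  have "(\<Sum>i<Suc K. \<Sum>j<Suc K. Z i j) = (\<Sum>i<Suc K. (\<Sum>j<K. Z i j) + Z i K)" by simp
  also have "\<dots> = (\<Sum>i<K. (\<Sum>j<K. Z i j) + Z i K) + ((\<Sum>j<K. Z K j) + Z K K)" by simp
  also have "\<dots> = (\<Sum>i<K. \<Sum>j<K. Z i j) + ((\<Sum>i<K. Z i K) + (\<Sum>j<K. Z K j)) + Z K K"
    by (simp only: sum.distrib add.assoc)
  also have "(\<Sum>i<K. Z i K) + (\<Sum>j<K. Z K j) = (\<Sum>i<K. Z i K + Z K i)" by (simp only: sum.distrib)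
  also have "\<dots> = 0"
  proof (intro sum.neutral ballI)
    fix i assume "i \<in> {..<K}"
    then have "Z i K = - Z K i" using Suc.prems(1)[of i K] by simp
    then show "Z i K + Z K i = 0" by simp
  qed
  finally show ?case using IH Suc.prems(2)[of K] by simp
qed

locale imb =
  fixes K :: nat and I :: "pt \<Rightarrow> int"
  assumes rec: "\<And>n p. p \<in> Par (Suc n) \<Longrightarrow> Suc n \<le> K \<Longrightarrow>
      I p = (\<Sum>r<K. if remb p r then sg K p r * I (dec p r) else 0)"
begin

definition J :: "pt \<Rightarrow> int" where
  "J v = (\<Sum>i<K. if addb v i then (-1)^i * sg K v i * I (inc v i) else 0)"

lemma O_eq:
  assumes v: "v \<in> Par n" and nK: "n < K"
    and IH: "\<And>u. 0 < n \<Longrightarrow> u \<in> Par (n - 1) \<Longrightarrow> J u = (if even (n - 1) then I u else 0)"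
  shows "(\<Sum>r<K. if remb v r then sg K v r * J (dec v r) else 0) = (if odd n then I v else 0)"
proof (cases n)
  case 0
  then have "\<And>r. \<not> remb v r" using Par_zero[OF v] unfolding remb_def by simp
  then show ?thesis using 0 by simp
next
  case (Suc n')
  have "(\<Sum>r<K. if remb v r then sg K v r * J (dec v r) else 0)
      = (\<Sum>r<K. if even n' then (if remb v r then sg K v r * I (dec v r) else 0) else 0)"
  proof (intro sum.cong refl)
    fix r assume "r \<in> {..<K}"
    show "(if remb v r then sg K v r * J (dec v r) else 0) = (if even n' then (if remb v r then sg K v r * I (dec v r) else 0) else 0)"
    proof (cases "remb v r")
      case True
      then have "dec v r \<in> Par n'" using dec_Par v Suc by blast
      then show ?thesis using IH[of "dec v r"] Suc True by simp
    qed simp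
  qed
  also have "\<dots> = (if even n' then I v else 0)"
    using rec[of v n'] v Suc nK by simp
  finally show ?thesis using Suc by simp
qed

lemma J_eq: "v \<in> Par n \<Longrightarrow> n < K \<Longrightarrow> J v = (if even n then I v else 0)"
proof (induction n arbitrary: v rule: less_induct)
  case (less n)
  note v = less.prems(1) and nK = less.prems(2)
  have mono: "\<And>i. v (Suc i) \<le> v i" using v unfolding Par_def by blast
  define X where "X i r = (if addb v i \<and> remb (inc v i) r then (-1)^i * sg K v i * (sg K (inc v i) r * I (dec (inc v i) r)) else 0)" for i r
  define Y where "Y r i = (if remb v r \<and> addb (dec v r) i then sg K v r * ((-1)^i * sg K (dec v r) i * I (inc (dec v r) i)) else 0)" for r i
  have J1: "J v = (\<Sum>i<K. \<Sum>r<K. X i r)"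
    unfolding J_def
  proof (intro sum.cong refl)
    fix i assume "i \<in> {..<K}"
    show "(if addb v i then (-1)^i * sg K v i * I (inc v i) else 0) = (\<Sum>r<K. X i r)"
    proof (cases "addb v i")
      case True
      have "I (inc v i) = (\<Sum>r<K. if remb (inc v i) r then sg K (inc v i) r * I (dec (inc v i) r) else 0)"
        using rec[OF inc_Par[OF v True]] nK by simp
      have "(-1)^i * sg K v i * I (inc v i) = (\<Sum>r<K. (-1)^i * sg K v i * (if remb (inc v i) r then sg K (inc v i) r * I (dec (inc v i) r) else 0))"
        by (subst \<open>I (inc v i) = _\<close>) (simp add: sum_distrib_left)
      also have "\<dots> = (\<Sum>r<K. X i r)"
        using True unfolding X_def by (intro sum.cong refl) simp
      finally show ?thesis using True by simp
    next
      case False then show ?thesis unfolding X_def by simp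
    qed
  qed
  have O1: "(\<Sum>r<K. if remb v r then sg K v r * J (dec v r) else 0) = (\<Sum>r<K. \<Sum>i<K. Y r i)"
  proof (intro sum.cong refl)
    fix r assume "r \<in> {..<K}"
    show "(if remb v r then sg K v r * J (dec v r) else 0) = (\<Sum>i<K. Y r i)"
    proof (cases "remb v r")
      case True
      have "sg K v r * J (dec v r) = (\<Sum>i<K. sg K v r * (if addb (dec v r) i then (-1)^i * sg K (dec v r) i * I (inc (dec v r) i) else 0))"
        unfolding J_def by (simp add: sum_distrib_left)
      also have "\<dots> = (\<Sum>i<K. Y r i)"
        using True unfolding Y_def by (intro sum.cong refl) simp
      finally show ?thesis using True by simp
    next
      case False then show ?thesis unfolding Y_def by simp
    qed
  qed
  have O2: "(\<Sum>r<K. if remb v r then sg K v r * J (dec v r) else 0) = (if odd n then I v else 0)"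
  proof (rule O_eq[OF v nK])
    fix u assume "0 < n" "u \<in> Par (n - 1)"
    then show "J u = (if even (n - 1) then I u else 0)" using less.IH[of "n - 1" u] nK by simp
  qed
  have Xd: "X i i = (if addb v i then (-1)^i * I v else 0)" for i
    using remb_inc[OF v, of i] unfolding X_def by (simp add: mult.assoc[symmetric])
  have Yd: "Y r r = (if remb v r then (-1)^r * I v else 0)" for r
  proof (cases "remb v r")
    case True
    then have "0 < v r" unfolding remb_def by simp
    then show ?thesis using True addb_dec[OF v True] inc_dec[of v r] unfolding Y_def
      by (simp add: mult.assoc[symmetric] mult.commute[of "sg K v r"])
  qed (simp add: Y_def)
  have XY: "X i r = - Y r i" if iK: "i < K" and rK: "r < K" and ir: "i \<noteq> r" for i r
  proof -
    have C: "(addb v i \<and> remb (inc v i) r) \<longleftrightarrow> (remb v r \<and> addb (dec v r) i)"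
      using mono[of r] mono[of "i - 1"] ir
      unfolding addb_def remb_def inc_def dec_def
      by (cases i) (auto split: if_splits)
    have E: "dec (inc v i) r = inc (dec v r) i"
      using ir unfolding inc_def dec_def by (auto simp: fun_eq_iff)
    show ?thesis
    proof (cases "remb v r \<and> addb (dec v r) i")
      case True
      then have pos: "0 < v r" unfolding remb_def by auto
      have s1: "sg K (inc v i) r = (if r < i then - sg K v r else sg K v r)" using sg_inc[OF iK] .
      have s2: "sg K (dec v r) i = (if i < r then - sg K v i else sg K v i)" using sg_dec[of r K v i, OF rK pos] .
      have x: "X i r = (-1)^i * sg K v i * (sg K (inc v i) r * I (inc (dec v r) i))"
        using True C E unfolding X_def by simp
      have y: "Y r i = sg K v r * ((-1)^i * sg K (dec v r) i * I (inc (dec v r) i))"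
        using True unfolding Y_def by simp
      show ?thesis
      proof (cases "i < r")
        case True
        then show ?thesis using x y s1 s2 by (simp add: algebra_simps)
      next
        case False
        then have "r < i" using ir by simp
        then show ?thesis using x y s1 s2 False by (simp add: algebra_simps)
      qed
    next
      case False then show ?thesis using C unfolding X_def Y_def by auto
    qed
  qed
  have S1: "(\<Sum>i<K. \<Sum>r<K. X i r) = (\<Sum>i<K. if addb v i then (-1)^i * I v else 0) + (\<Sum>i<K. \<Sum>r<K. if r = i then 0 else X i r)"
    using diag_split[of X K] Xd by simp
  have S2: "(\<Sum>r<K. \<Sum>i<K. Y r i) = (\<Sum>r<K. if remb v r then (-1)^r * I v else 0) + (\<Sum>r<K. \<Sum>i<K. if i = r then 0 else Y r i)"
    using diag_split[of Y K] Yd by simp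
  have S3: "(\<Sum>i<K. \<Sum>r<K. if r = i then 0 else X i r) = - (\<Sum>r<K. \<Sum>i<K. if i = r then 0 else Y r i)"
  proof -
    have "(\<Sum>i<K. \<Sum>r<K. if r = i then 0 else X i r) = (\<Sum>i<K. \<Sum>r<K. - (if i = r then 0 else Y r i))"
      using XY by (intro sum.cong refl) auto
    also have "\<dots> = - (\<Sum>i<K. \<Sum>r<K. if i = r then 0 else Y r i)" by (simp add: sum_negf)
    also have "(\<Sum>i<K. \<Sum>r<K. if i = r then 0 else Y r i) = (\<Sum>r<K. \<Sum>i<K. if i = r then 0 else Y r i)"
      by (rule sum.swap)
    finally show ?thesis .
  qed
  obtain K' where K': "K = Suc K'" using nK by (cases K) auto
  have vK: "v K' = 0" using Par_zero[OF v] nK K' by simp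
  have P: "(\<Sum>i<K. if addb v i then (-1::int)^i else 0) + (\<Sum>r<K. if remb v r then (-1)^r else 0) = 1"
    using phi[of v K'] mono vK K' by simp
  have P2: "(\<Sum>i<K. if addb v i then (-1)^i * I v else 0) + (\<Sum>r<K. if remb v r then (-1)^r * I v else 0) = I v"
  proof -
    have "(\<Sum>i<K. if addb v i then (-1)^i * I v else 0) + (\<Sum>r<K. if remb v r then (-1)^r * I v else 0)
       = ((\<Sum>i<K. if addb v i then (-1::int)^i else 0) + (\<Sum>r<K. if remb v r then (-1)^r else 0)) * I v"
      by (simp add: distrib_right sum_distrib_right) (intro arg_cong2[where f="(+)"] sum.cong, auto)
    then show ?thesis using P by simp
  qed
  have "J v = (\<Sum>i<K. if addb v i then (-1)^i * I v else 0) + (\<Sum>r<K. if remb v r then (-1)^r * I v else 0)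
       - (\<Sum>r<K. \<Sum>i<K. Y r i)"
    using J1 S1 S2 S3 by simp
  also have "\<dots> = I v - (if odd n then I v else 0)" using P2 O1 O2 by simp
  finally show ?case by simp
qed

end


locale wts =
  fixes K :: nat and x y q t :: "'a::comm_ring_1"
begin

definition G :: "nat \<Rightarrow> nat \<Rightarrow> 'a" where
  "G i n = x^(n div 2) * (if odd i then y^n * q^(n div 2) * t^(n div 2) else 1)"
definition wt :: "pt \<Rightarrow> 'a" where "wt p = (\<Prod>i<K. G i (p i))"
definition cH :: "nat \<Rightarrow> 'a" where "cH j = x * (if odd j then y^2 * q * t else 1)"
definition cv :: "nat \<Rightarrow> 'a" where "cv n = (if even n then y else x^2 * y * q * t)"
definition kap :: 'a where "kap = x^2 * y^2 * q * t"

lemma G_H: "G i (n + 2) = G i n * cH i"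
  unfolding G_def cH_def by (simp add: power_add power2_eq_square algebra_simps)

lemma G_V: "G i (Suc n) * G (Suc i) (Suc n) = G i n * G (Suc i) n * cv n"
proof (cases "even n")
  case True
  then have d: "Suc n div 2 = n div 2" by presburger
  show ?thesis using True unfolding G_def cv_def d by (cases "even i") (simp_all add: algebra_simps)
next
  case False
  then have d: "Suc n div 2 = Suc (n div 2)" by presburger
  show ?thesis using False unfolding G_def cv_def d by (cases "even i") (simp_all add: power2_eq_square algebra_simps)
qed

lemma kap_H: "kap = cH r * cH (Suc r)"
  unfolding kap_def cH_def by (cases "even r") (simp_all add: power2_eq_square algebra_simps)

lemma kap_V: "0 < n \<Longrightarrow> kap = cv (n - 1) * cv n"
  unfolding kap_def cv_def by (cases n) (simp_all add: power2_eq_square algebra_simps)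

lemma wt_split1: "j < K \<Longrightarrow> wt p = G j (p j) * (\<Prod>i\<in>{..<K} - {j}. G i (p i))"
  unfolding wt_def by (simp add: prod.remove)

lemma wt_H: assumes "j < K" shows "wt (p(j := p j + 2)) = wt p * cH j"
proof -
  have "wt (p(j := p j + 2)) = G j (p j + 2) * (\<Prod>i\<in>{..<K} - {j}. G i ((p(j := p j + 2)) i))"
    using wt_split1[OF assms] by simp
  also have "(\<Prod>i\<in>{..<K} - {j}. G i ((p(j := p j + 2)) i)) = (\<Prod>i\<in>{..<K} - {j}. G i (p i))"
    by (intro prod.cong) auto
  also have "G j (p j + 2) * (\<Prod>i\<in>{..<K} - {j}. G i (p i)) = wt p * cH j"
    using wt_split1[OF assms, of p] G_H[of j "p j"] by (simp add: algebra_simps)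
  finally show ?thesis .
qed

lemma wt_split2: "Suc j < K \<Longrightarrow> wt p = G j (p j) * G (Suc j) (p (Suc j)) * (\<Prod>i\<in>{..<K} - {j} - {Suc j}. G i (p i))"
proof -
  assume a: "Suc j < K"
  have "wt p = G j (p j) * (\<Prod>i\<in>{..<K} - {j}. G i (p i))" using a wt_split1[of j p] by simp
  also have "(\<Prod>i\<in>{..<K} - {j}. G i (p i)) = G (Suc j) (p (Suc j)) * (\<Prod>i\<in>{..<K} - {j} - {Suc j}. G i (p i))"
    using a by (subst prod.remove[of _ "Suc j"]) auto
  finally show ?thesis by (simp add: algebra_simps)
qed

lemma wt_V: assumes "Suc j < K" "p (Suc j) = p j"
  shows "wt (p(j := Suc (p j), Suc j := Suc (p j))) = wt p * cv (p j)"
proof -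
  let ?p = "p(j := Suc (p j), Suc j := Suc (p j))"
  have "wt ?p = G j (Suc (p j)) * G (Suc j) (Suc (p j)) * (\<Prod>i\<in>{..<K} - {j} - {Suc j}. G i (?p i))"
    using wt_split2[OF assms(1), of ?p] by simp
  also have "(\<Prod>i\<in>{..<K} - {j} - {Suc j}. G i (?p i)) = (\<Prod>i\<in>{..<K} - {j} - {Suc j}. G i (p i))"
    by (intro prod.cong) auto
  also have "G j (Suc (p j)) * G (Suc j) (Suc (p j)) * (\<Prod>i\<in>{..<K} - {j} - {Suc j}. G i (p i)) = wt p * cv (p j)"
    using wt_split2[OF assms(1), of p] G_V[of j "p j"] assms(2) by (simp add: algebra_simps)
  finally show ?thesis .
qed

lemma sg_step: "Suc j < K \<Longrightarrow> sg K p j = (-1)^(p (Suc j)) * sg K p (Suc j)"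
  unfolding sg_def by (simp add: sum.atLeast_Suc_lessThan power_add)

lemma inc_inc_same: "inc (inc v j) j = v(j := v j + 2)"
  unfolding inc_def by (simp add: fun_eq_iff)

lemma inc_inc_comm: "inc (inc v j) i = inc (inc v i) j"
  unfolding inc_def by (simp add: fun_eq_iff)

lemma dec_dec_comm: "i \<noteq> j \<Longrightarrow> dec (dec v j) i = dec (dec v i) j"
  unfolding dec_def by (simp add: fun_eq_iff)

definition Qf :: "pt \<Rightarrow> 'a" where
  "Qf v = (\<Sum>j<K. \<Sum>i<K. if addb v j \<and> addb (inc v j) i then of_int (sg K v j * sg K (inc v j) i) * wt (inc (inc v j) i) else 0)"

lemma Q_eq:
  assumes v: "v \<in> Par n" and nK: "Suc (Suc n) \<le> K"
  shows "Qf v = wt v * ((\<Sum>j<K. if j = 0 \<or> v j + 2 \<le> v (j - 1) then cH j else 0)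
                 + (\<Sum>j<K. if addb v j \<and> v (Suc j) = v j then of_int ((-1)^(v j)) * cv (v j) else 0))"
proof -
  have mono: "\<And>i. v (Suc i) \<le> v i" using v unfolding Par_def by blast
  define Xq where "Xq j i = (if addb v j \<and> addb (inc v j) i then of_int (sg K v j * sg K (inc v j) i) * wt (inc (inc v j) i) else 0)" for j i
  define Pq where "Pq j i = (if i \<noteq> j \<and> addb v j \<and> addb v i then of_int (sg K v j * sg K (inc v j) i) * wt (inc (inc v j) i) else 0)" for j i
  define Dq where "Dq j i = (if i = j then (if j = 0 \<or> v j + 2 \<le> v (j - 1) then wt v * cH j else 0) else 0)
      + (if i = Suc j then (if addb v j \<and> v (Suc j) = v j then of_int ((-1)^(v j)) * (wt v * cv (v j)) else 0) else 0)" for j i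
  have XPD: "Xq j i = Pq j i + Dq j i" if jK: "j < K" and iK: "i < K" for j i
  proof (cases "i = j")
    case True
    have c: "(addb v j \<and> addb (inc v j) j) \<longleftrightarrow> (j = 0 \<or> v j + 2 \<le> v (j - 1))"
      unfolding addb_def inc_def by (cases j) auto
    show ?thesis using True c wt_H[OF jK, of v] unfolding Xq_def Pq_def Dq_def
      by (simp add: inc_inc_same)
  next
    case False
    note ij = False
    show ?thesis
    proof (cases "i = Suc j")
      case True
      have a2: "addb (inc v j) i" using True mono[of j] unfolding addb_def inc_def by auto
      show ?thesis
      proof (cases "v (Suc j) = v j")
        case True
        have na: "\<not> addb v i" using True \<open>i = Suc j\<close> unfolding addb_def by simp
        have s: "sg K v j * sg K (inc v j) i = (-1)^(v j)"
          using sg_step[of j p] sg_inc[OF jK, of v i] sg_step[of j v] iK \<open>i = Suc j\<close> True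
          by (simp add: mult.assoc[symmetric])
        have e: "inc (inc v j) i = v(j := Suc (v j), Suc j := Suc (v j))"
          using True \<open>i = Suc j\<close> unfolding inc_def by (auto simp: fun_eq_iff)
        have w: "wt (inc (inc v j) i) = wt v * cv (v j)"
          using e wt_V[of j v] iK \<open>i = Suc j\<close> True by simp
        show ?thesis using a2 na s w True \<open>i = Suc j\<close> unfolding Xq_def Pq_def Dq_def by simp
      next
        case False
        then have "v (Suc j) < v j" using mono[of j] by simp
        then have "addb v i" using \<open>i = Suc j\<close> unfolding addb_def by simp
        then show ?thesis using a2 False \<open>i = Suc j\<close> unfolding Xq_def Pq_def Dq_def by simp
      qed
    next
      case False
      have "addb (inc v j) i \<longleftrightarrow> addb v i"
        using False ij unfolding addb_def inc_def by (cases i) auto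
      then show ?thesis using False ij unfolding Xq_def Pq_def Dq_def by simp
    qed
  qed
  have P0: "(\<Sum>j<K. \<Sum>i<K. Pq j i) = 0"
  proof (rule antisym_sum)
    fix j i assume jK: "j < K" and iK: "i < K"
    show "Pq j i = - Pq i j"
    proof (cases "i \<noteq> j \<and> addb v j \<and> addb v i")
      case True
      then have "i < j \<or> j < i" by auto
      then show ?thesis using True sg_inc[OF jK, of v i] sg_inc[OF iK, of v j] inc_inc_comm[of v j i]
        unfolding Pq_def by (auto simp: algebra_simps)
    next
      case False then show ?thesis unfolding Pq_def by auto
    qed
  next
    fix i show "Pq i i = 0" unfolding Pq_def by simp
  qed
  have Dsum: "(\<Sum>j<K. \<Sum>i<K. Dq j i) = wt v * ((\<Sum>j<K. if j = 0 \<or> v j + 2 \<le> v (j - 1) then cH j else 0)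
                 + (\<Sum>j<K. if addb v j \<and> v (Suc j) = v j then of_int ((-1)^(v j)) * cv (v j) else 0))"
  proof -
    have "(\<Sum>i<K. Dq j i) = (if j = 0 \<or> v j + 2 \<le> v (j - 1) then wt v * cH j else 0)
       + (if addb v j \<and> v (Suc j) = v j then of_int ((-1)^(v j)) * (wt v * cv (v j)) else 0)"
      if jK: "j < K" for j
    proof -
      have "(\<Sum>i<K. Dq j i) = (if j = 0 \<or> v j + 2 \<le> v (j - 1) then wt v * cH j else 0)
         + (if Suc j < K then (if addb v j \<and> v (Suc j) = v j then of_int ((-1)^(v j)) * (wt v * cv (v j)) else 0) else 0)"
        unfolding Dq_def using jK by (simp add: sum.distrib)
      moreover have "addb v j \<Longrightarrow> Suc j < K" using addb_le[OF v, of j] nK by simp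
      ultimately show ?thesis by auto
    qed
    then have "(\<Sum>j<K. \<Sum>i<K. Dq j i) = (\<Sum>j<K. (if j = 0 \<or> v j + 2 \<le> v (j - 1) then wt v * cH j else 0)
       + (if addb v j \<and> v (Suc j) = v j then of_int ((-1)^(v j)) * (wt v * cv (v j)) else 0))"
      by (intro sum.cong) auto
    also have "\<dots> = wt v * ((\<Sum>j<K. if j = 0 \<or> v j + 2 \<le> v (j - 1) then cH j else 0)
                 + (\<Sum>j<K. if addb v j \<and> v (Suc j) = v j then of_int ((-1)^(v j)) * cv (v j) else 0))"
    proof -
      have a: "(\<Sum>j<K. if j = 0 \<or> v j + 2 \<le> v (j - 1) then wt v * cH j else 0) = wt v * (\<Sum>j<K. if j = 0 \<or> v j + 2 \<le> v (j - 1) then cH j else 0)"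
        by (subst sum_distrib_left) (rule sum.cong; simp)
      have b: "(\<Sum>j<K. if addb v j \<and> v (Suc j) = v j then of_int ((-1)^(v j)) * (wt v * cv (v j)) else 0)
          = wt v * (\<Sum>j<K. if addb v j \<and> v (Suc j) = v j then of_int ((-1)^(v j)) * cv (v j) else 0)"
        by (subst sum_distrib_left) (rule sum.cong; simp add: algebra_simps)
      show ?thesis by (simp only: sum.distrib a b distrib_left)
    qed
    finally show ?thesis .
  qed
  have "Qf v = (\<Sum>j<K. \<Sum>i<K. Xq j i)" unfolding Qf_def Xq_def by simp
  also have "\<dots> = (\<Sum>j<K. \<Sum>i<K. Pq j i) + (\<Sum>j<K. \<Sum>i<K. Dq j i)"
    using XPD by (simp add: sum.distrib[symmetric])
  finally show ?thesis using P0 Dsum by simp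
qed

definition Rf :: "pt \<Rightarrow> 'a" where
  "Rf v = (\<Sum>r<K. \<Sum>s<K. if remb v r \<and> remb (dec v r) s then of_int ((-1)^r * sg K v r * ((-1)^s * sg K (dec v r) s)) * wt (dec (dec v r) s) else 0)"

lemma R_eq:
  assumes v: "v \<in> Par n" and nK: "Suc (Suc n) \<le> K"
  shows "kap * Rf v = wt v * ((\<Sum>r<K. if v (Suc r) + 2 \<le> v r then cH (Suc r) else 0)
     + (\<Sum>r<K. if 0 < r \<and> remb v r \<and> v r = v (r - 1) then of_int ((-1)^(v r)) * cv (v r) else 0))"
proof -
  have mono: "\<And>i. v (Suc i) \<le> v i" using v unfolding Par_def by blast
  define Yr where "Yr r s = (if remb v r \<and> remb (dec v r) s then of_int ((-1)^r * sg K v r * ((-1)^s * sg K (dec v r) s)) * wt (dec (dec v r) s) else 0)" for r s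
  define Pr where "Pr r s = (if s \<noteq> r \<and> remb v r \<and> remb v s then of_int ((-1)^r * sg K v r * ((-1)^s * sg K (dec v r) s)) * wt (dec (dec v r) s) else 0)" for r s
  define Dr where "Dr r s = (if s = r then (if v (Suc r) + 2 \<le> v r then wt (v(r := v r - 2)) else 0) else 0)
      + (if s = r - 1 then (if 0 < r \<and> remb v r \<and> v r = v (r - 1) then of_int ((-1)^(v r)) * wt (v(r - 1 := v r - 1, r := v r - 1)) else 0) else 0)" for r s
  have YPD: "Yr r s = Pr r s + Dr r s" if rK: "r < K" and sK: "s < K" for r s
  proof (cases "s = r")
    case True
    have c: "(remb v r \<and> remb (dec v r) r) \<longleftrightarrow> v (Suc r) + 2 \<le> v r"
      unfolding remb_def dec_def by auto
    have e: "dec (dec v r) r = v(r := v r - 2)" unfolding dec_def by (simp add: fun_eq_iff)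
    have "(-1::int)^r * sg K v r * ((-1)^r * sg K v r) = 1"
      by (simp add: algebra_simps power_mult_distrib[symmetric])
    then show ?thesis using True c e unfolding Yr_def Pr_def Dr_def
      by (cases r) (simp_all add: algebra_simps)
  next
    case False
    note rs = False
    show ?thesis
    proof (cases "0 < r \<and> s = r - 1")
      case True
      then have rS: "r = Suc s" by simp
      show ?thesis
      proof (cases "remb v r")
        case False then show ?thesis using rs True unfolding Yr_def Pr_def Dr_def by simp
      next
        case rem: True
        then have pos: "0 < v r" unfolding remb_def by simp
        have c2: "remb (dec v r) s" using pos mono[of s] rS unfolding remb_def dec_def by auto
        show ?thesis
        proof (cases "v r = v s")
          case True
          have nr: "\<not> remb v s" using True rS unfolding remb_def by simp
          have sgd: "sg K (dec v r) s = (-1)^(v r - 1) * sg K v r"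
            using sg_step[of s "dec v r"] rK rS unfolding dec_def by (simp add: sg_def)
          obtain a where a: "v r = Suc a" using pos by (cases "v r") auto
          have sgn: "(-1::int)^r * sg K v r * ((-1)^s * sg K (dec v r) s) = (-1)^(v r)"
            using sgd rS a by (simp add: algebra_simps power_mult_distrib[symmetric])
          have e: "dec (dec v r) s = v(r - 1 := v r - 1, r := v r - 1)"
            using True rS unfolding dec_def by (auto simp: fun_eq_iff)
          show ?thesis using rem c2 nr sgn e True rs rS unfolding Yr_def Pr_def Dr_def by simp
        next
          case False
          then have "v r < v s" using mono[of s] rS by simp
          then have "remb v s" using rS unfolding remb_def by simp
          then show ?thesis using rem c2 rs rS \<open>v r < v s\<close> unfolding Yr_def Pr_def Dr_def by simp
        qed
      qed
    next
      case False
      have "remb (dec v r) s \<longleftrightarrow> remb v s"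
        using False rs unfolding remb_def dec_def by auto
      then show ?thesis using False rs unfolding Yr_def Pr_def Dr_def by auto
    qed
  qed
  have P0: "(\<Sum>r<K. \<Sum>s<K. Pr r s) = 0"
  proof (rule antisym_sum)
    fix r s assume rK: "r < K" and sK: "s < K"
    show "Pr r s = - Pr s r"
    proof (cases "s \<noteq> r \<and> remb v r \<and> remb v s")
      case True
      then have pr: "0 < v r" and ps: "0 < v s" unfolding remb_def by auto
      have d1: "sg K (dec v r) s = (if s < r then - sg K v s else sg K v s)" using sg_dec[of r K v s, OF rK pr] .
      have d2: "sg K (dec v s) r = (if r < s then - sg K v r else sg K v r)" using sg_dec[of s K v r, OF sK ps] .
      have e: "dec (dec v s) r = dec (dec v r) s" using dec_dec_comm[of s r v] True by simp
      have p1: "Pr r s = of_int ((-1)^r * sg K v r * ((-1)^s * sg K (dec v r) s)) * wt (dec (dec v r) s)"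
        using True unfolding Pr_def by simp
      have p2: "Pr s r = of_int ((-1)^s * sg K v s * ((-1)^r * sg K (dec v s) r)) * wt (dec (dec v r) s)"
        using True e unfolding Pr_def by auto
      have "(-1)^r * sg K v r * ((-1)^s * sg K (dec v r) s) = - ((-1::int)^s * sg K v s * ((-1)^r * sg K (dec v s) r))"
      proof (cases "s < r")
        case True then show ?thesis using d1 d2 by simp
      next
        case False then have "r < s" using \<open>s \<noteq> r \<and> remb v r \<and> remb v s\<close> by simp
        then show ?thesis using d1 d2 False by simp
      qed
      then show ?thesis using p1 p2 by simp
    next
      case False then show ?thesis unfolding Pr_def by auto
    qed
  next
    fix r show "Pr r r = 0" unfolding Pr_def by simp
  qed
  have Dsum: "(\<Sum>s<K. Dr r s) = (if v (Suc r) + 2 \<le> v r then wt (v(r := v r - 2)) else 0)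
      + (if 0 < r \<and> remb v r \<and> v r = v (r - 1) then of_int ((-1)^(v r)) * wt (v(r - 1 := v r - 1, r := v r - 1)) else 0)"
    if rK: "r < K" for r
  proof -
    have "r - 1 < K" using rK by simp
    then show ?thesis unfolding Dr_def using rK by (simp add: sum.distrib)
  qed
  have H1: "kap * wt (v(r := v r - 2)) = wt v * cH (Suc r)" if rK: "r < K" and h: "v (Suc r) + 2 \<le> v r" for r
  proof -
    let ?p = "v(r := v r - 2)"
    have "?p(r := ?p r + 2) = v" using h by (auto simp: fun_eq_iff)
    then have "wt v = wt ?p * cH r" using wt_H[OF rK, of ?p] by simp
    then show ?thesis using kap_H[of r] by (simp add: algebra_simps)
  qed
  have V1: "kap * wt (v(r - 1 := v r - 1, r := v r - 1)) = wt v * cv (v r)"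
    if rK: "r < K" and h: "0 < r \<and> remb v r \<and> v r = v (r - 1)" for r
  proof -
    obtain j where rj: "r = Suc j" using h by (cases r) auto
    have "0 < v r" using h unfolding remb_def by simp
    then obtain a where a: "v r = Suc a" using gr0_implies_Suc by blast
    have vj: "v j = Suc a" using h a rj by simp
    let ?p = "v(j := a, Suc j := a)"
    have pj: "?p (Suc j) = ?p j" by simp
    have e: "?p(j := Suc (?p j), Suc j := Suc (?p j)) = v"
    proof (rule ext)
      fix k show "(?p(j := Suc (?p j), Suc j := Suc (?p j))) k = v k"
        using vj a rj by (cases "k = j"; cases "k = Suc j") auto
    qed
    have "wt (?p(j := Suc (?p j), Suc j := Suc (?p j))) = wt ?p * cv (?p j)"
      by (rule wt_V) (use rK rj in auto)
    then have "wt v = wt ?p * cv a" using e by simp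
    moreover have "kap = cv a * cv (Suc a)" using kap_V[of "Suc a"] by simp
    moreover have "v(r - 1 := v r - 1, r := v r - 1) = ?p" using rj a by simp
    ultimately show ?thesis using a by (simp add: algebra_simps)
  qed
  have "Rf v = (\<Sum>r<K. \<Sum>s<K. Yr r s)" unfolding Rf_def Yr_def by simp
  also have "\<dots> = (\<Sum>r<K. \<Sum>s<K. Pr r s) + (\<Sum>r<K. \<Sum>s<K. Dr r s)"
    using YPD by (simp add: sum.distrib[symmetric])
  also have "(\<Sum>r<K. \<Sum>s<K. Dr r s) = (\<Sum>r<K. (if v (Suc r) + 2 \<le> v r then wt (v(r := v r - 2)) else 0)
      + (if 0 < r \<and> remb v r \<and> v r = v (r - 1) then of_int ((-1)^(v r)) * wt (v(r - 1 := v r - 1, r := v r - 1)) else 0))"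
    using Dsum by (intro sum.cong) auto
  finally have RR: "Rf v = (\<Sum>r<K. if v (Suc r) + 2 \<le> v r then wt (v(r := v r - 2)) else 0)
      + (\<Sum>r<K. if 0 < r \<and> remb v r \<and> v r = v (r - 1) then of_int ((-1)^(v r)) * wt (v(r - 1 := v r - 1, r := v r - 1)) else 0)"
    using P0 by (simp add: sum.distrib)
  have a: "kap * (\<Sum>r<K. if v (Suc r) + 2 \<le> v r then wt (v(r := v r - 2)) else 0)
      = wt v * (\<Sum>r<K. if v (Suc r) + 2 \<le> v r then cH (Suc r) else 0)"
    by (simp only: sum_distrib_left) (rule sum.cong; simp add: H1)
  have b: "kap * (\<Sum>r<K. if 0 < r \<and> remb v r \<and> v r = v (r - 1) then of_int ((-1)^(v r)) * wt (v(r - 1 := v r - 1, r := v r - 1)) else 0)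
      = wt v * (\<Sum>r<K. if 0 < r \<and> remb v r \<and> v r = v (r - 1) then of_int ((-1)^(v r)) * cv (v r) else 0)"
  proof (simp only: sum_distrib_left, rule sum.cong, simp)
    fix r assume "r \<in> {..<K}"
    then show "kap * (if 0 < r \<and> remb v r \<and> v r = v (r - 1) then of_int ((-1)^(v r)) * wt (v(r - 1 := v r - 1, r := v r - 1)) else 0)
      = wt v * (if 0 < r \<and> remb v r \<and> v r = v (r - 1) then of_int ((-1)^(v r)) * cv (v r) else 0)"
    proof (cases "0 < r \<and> remb v r \<and> v r = v (r - 1)")
      case True
      have V: "kap * wt (v(r - 1 := v r - 1, r := v r - 1)) = wt v * cv (v r)"
        using V1[of r] True \<open>r \<in> {..<K}\<close> by simp
      have "kap * (of_int ((-1)^(v r)) * wt (v(r - 1 := v r - 1, r := v r - 1))) = wt v * (of_int ((-1)^(v r)) * cv (v r))"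
      proof -
        have "kap * (of_int ((-1)^(v r)) * wt (v(r - 1 := v r - 1, r := v r - 1))) = of_int ((-1)^(v r)) * (kap * wt (v(r - 1 := v r - 1, r := v r - 1)))"
          by (rule mult.left_commute)
        also have "\<dots> = of_int ((-1)^(v r)) * (wt v * cv (v r))" by (simp only: V)
        also have "\<dots> = wt v * (of_int ((-1)^(v r)) * cv (v r))" by (rule mult.left_commute)
        finally show ?thesis .
      qed
      then show ?thesis using True by simp
    next
      case False
      show ?thesis by (simp only: if_not_P[OF False] mult_zero_right)
    qed
  qed
  show ?thesis using RR a b by (simp add: distrib_left)
qed

lemma scal:
  assumes v: "v \<in> Par n" and nK: "Suc (Suc n) \<le> K"
  shows "(\<Sum>j<K. if j = 0 \<or> v j + 2 \<le> v (j - 1) then cH j else 0)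
       + (\<Sum>j<K. if addb v j \<and> v (Suc j) = v j then of_int ((-1)^(v j)) * cv (v j) else 0)
     = x + y + ((\<Sum>r<K. if v (Suc r) + 2 \<le> v r then cH (Suc r) else 0)
       + (\<Sum>r<K. if 0 < r \<and> remb v r \<and> v r = v (r - 1) then of_int ((-1)^(v r)) * cv (v r) else 0))"
proof -
  have mono: "\<And>i. v (Suc i) \<le> v i" using v unfolding Par_def by blast
  obtain K' where K': "K = Suc K'" using nK by (cases K) auto
  have vK': "v K' = 0" using Par_zero[OF v] nK K' by simp
  have vK: "v (Suc K') = 0" using Par_zero[OF v] nK K' by simp
  have vK2: "v (Suc (Suc K')) = 0" using Par_zero[OF v] nK K' by simp
  have H1: "(\<Sum>j<K. if j = 0 \<or> v j + 2 \<le> v (j - 1) then cH j else 0)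
      = x + (\<Sum>r<K'. if v (Suc r) + 2 \<le> v r then cH (Suc r) else 0)"
    unfolding K' by (simp only: sum.lessThan_Suc_shift) (simp add: cH_def)
  have H2: "(\<Sum>r<K. if v (Suc r) + 2 \<le> v r then cH (Suc r) else 0)
      = (\<Sum>r<K'. if v (Suc r) + 2 \<le> v r then cH (Suc r) else 0)"
    unfolding K' using vK' by simp
  define e where "e n = (of_int ((-1)^n) * cv n :: 'a)" for n
  define Z where "Z j = (if v (Suc j) = v j \<and> v (Suc (Suc j)) = v (Suc j) then e (v j) else 0)" for j
  define F where "F j = (if j = 0 then 0 else Z (j - 1))" for j
  define b where "b r = (if 0 < r \<and> remb v r \<and> v r = v (r - 1) then e (v r) else 0)" for r
  have B1: "(\<Sum>r<K. b r) = (\<Sum>j<K. b (Suc j))"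
  proof -
    have "(\<Sum>r<K. b r) = b 0 + (\<Sum>j<K'. b (Suc j))" unfolding K' by (simp only: sum.lessThan_Suc_shift)
    moreover have "b 0 = 0" unfolding b_def by simp
    moreover have "b (Suc K') = 0" using vK vK2 unfolding b_def remb_def by simp
    ultimately show ?thesis unfolding K' by simp
  qed
  have step: "(if addb v j \<and> v (Suc j) = v j then e (v j) else 0) - b (Suc j) = F (Suc j) - F j" for j
  proof (cases "v (Suc j) = v j")
    case False
    then show ?thesis unfolding F_def Z_def b_def by (cases j) auto
  next
    case True
    note u = True
    show ?thesis
    proof (cases j)
      case 0
      then show ?thesis using u mono[of "Suc j"] unfolding F_def Z_def b_def addb_def remb_def by auto
    next
      case (Suc j')
      have m1: "v j \<le> v j'" using mono[of j'] Suc by simp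
      show ?thesis using u m1 Suc mono[of "Suc j"] unfolding F_def Z_def b_def addb_def remb_def
        by (cases "v j = v j'"; cases "v (Suc (Suc j)) = v (Suc j)") auto
    qed
  qed
  have V: "(\<Sum>j<K. if addb v j \<and> v (Suc j) = v j then e (v j) else 0) - (\<Sum>r<K. b r) = y"
  proof -
    have "(\<Sum>j<K. if addb v j \<and> v (Suc j) = v j then e (v j) else 0) - (\<Sum>r<K. b r)
        = (\<Sum>j<K. (if addb v j \<and> v (Suc j) = v j then e (v j) else 0) - b (Suc j))"
      using B1 by (simp add: sum_subtractf)
    also have "\<dots> = (\<Sum>j<K. F (Suc j) - F j)" using step by simp
    also have "\<dots> = F K - F 0" by (rule sum_lessThan_telescope)
    also have "\<dots> = y" unfolding F_def Z_def e_def cv_def K' using vK' vK vK2 by simp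
    finally show ?thesis .
  qed
  have "(\<Sum>j<K. if addb v j \<and> v (Suc j) = v j then of_int ((-1)^(v j)) * cv (v j) else 0)
      = y + (\<Sum>r<K. if 0 < r \<and> remb v r \<and> v r = v (r - 1) then of_int ((-1)^(v r)) * cv (v r) else 0)"
    using V unfolding e_def b_def by (simp add: algebra_simps)
  then show ?thesis using H1 H2 by (simp add: algebra_simps)
qed

lemma local_id:
  assumes v: "v \<in> Par n" and nK: "Suc (Suc n) \<le> K"
  shows "Qf v = (x + y) * wt v + kap * Rf v"
proof -
  obtain A B C D where QQ: "Qf v = wt v * (A + B)" and RR: "kap * Rf v = wt v * (C + D)"
    and SS: "A + B = x + y + (C + D)"
    using Q_eq[OF v nK] R_eq[OF v nK] scal[OF v nK] by blast
  have "Qf v = wt v * (x + y + (C + D))" using QQ SS by simp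
  also have "\<dots> = (x + y) * wt v + wt v * (C + D)" by (simp add: algebra_simps)
  finally show ?thesis using RR by simp
qed

end


locale imbw = imb K I + wts K x y q t
  for K :: nat and I :: "pt \<Rightarrow> int" and x y q t :: "'a::comm_ring_1" +
  assumes base: "I (\<lambda>_. 0) = 1"
begin

definition Fs :: "nat \<Rightarrow> 'a" where "Fs k = (\<Sum>p\<in>Par k. wt p * of_int (I p))"
definition P1 :: "pt \<Rightarrow> 'a" where
  "P1 m = (\<Sum>i<K. if addb m i then of_int (sg K m i) * wt (inc m i) else 0)"
definition R1 :: "pt \<Rightarrow> 'a" where
  "R1 m = (\<Sum>s<K. if remb m s then of_int ((-1)^s * sg K m s) * wt (dec m s) else 0)"

lemma sum_if_multR: "(\<Sum>i\<in>A. if P i then f i else 0) * c = (\<Sum>i\<in>A. if P i then f i * c else (0::'a))"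
  by (simp add: sum_distrib_right) (rule sum.cong; simp)

lemma sum_if_multL: "c * (\<Sum>i\<in>A. if P i then f i else 0) = (\<Sum>i\<in>A. if P i then c * f i else (0::'a))"
  by (simp add: sum_distrib_left) (rule sum.cong; simp)

lemma of_int_sum_if: "of_int (\<Sum>i\<in>A. if P i then f i else 0) = (\<Sum>i\<in>A. if P i then of_int (f i) else (0::'a))"
  by (simp add: of_int_sum) (rule sum.cong; simp)

lemma of_int_if0: "of_int (if c then a else 0) = (if c then of_int a else (0::'a))" by simp

lemma stepA:
  assumes "Suc (Suc k) \<le> K"
  shows "Fs (Suc (Suc k)) = (\<Sum>m\<in>Par (Suc k). of_int (I m) * P1 m)"
proof -
  have "Fs (Suc (Suc k)) = (\<Sum>l\<in>Par (Suc (Suc k)). \<Sum>r<K. if remb l r then wt l * of_int (sg K l r * I (dec l r)) else 0)"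
    unfolding Fs_def
  proof (intro sum.cong refl)
    fix l assume l: "l \<in> Par (Suc (Suc k))"
    have "wt l * of_int (I l) = wt l * of_int (\<Sum>r<K. if remb l r then sg K l r * I (dec l r) else 0)"
      using rec[OF l] assms by simp
    also have "\<dots> = (\<Sum>r<K. if remb l r then wt l * of_int (sg K l r * I (dec l r)) else 0)"
      by (simp add: of_int_sum sum_distrib_left of_int_if0 if_distrib cong: if_cong)
    finally show "wt l * of_int (I l) = (\<Sum>r<K. if remb l r then wt l * of_int (sg K l r * I (dec l r)) else 0)" .
  qed
  also have "\<dots> = (\<Sum>m\<in>Par (Suc k). \<Sum>i<K. if addb m i then wt (inc m i) * of_int (sg K (inc m i) i * I (dec (inc m i) i)) else 0)"
    using TR[of "Suc k" K "\<lambda>l r. wt l * of_int (sg K l r * I (dec l r))"] assms by simp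
  also have "\<dots> = (\<Sum>m\<in>Par (Suc k). of_int (I m) * P1 m)"
    unfolding P1_def
    by (intro sum.cong refl) (simp add: sum_distrib_left algebra_simps if_distrib cong: if_cong)
  finally show ?thesis .
qed

lemma Qf_alt: "Qf v = (\<Sum>j<K. if addb v j then of_int (sg K v j) * P1 (inc v j) else 0)"
  unfolding Qf_def P1_def
  by (intro sum.cong refl) (simp add: sum_distrib_left algebra_simps if_distrib cong: if_cong)

lemma stepB:
  assumes "Suc k \<le> K"
  shows "(\<Sum>m\<in>Par (Suc k). of_int (I m) * P1 m) = (\<Sum>v\<in>Par k. of_int (I v) * Qf v)"
proof -
  have "(\<Sum>m\<in>Par (Suc k). of_int (I m) * P1 m) = (\<Sum>m\<in>Par (Suc k). \<Sum>r<K. if remb m r then of_int (sg K m r * I (dec m r)) * P1 m else 0)"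
  proof (intro sum.cong refl)
    fix m assume m: "m \<in> Par (Suc k)"
    have "of_int (I m) * P1 m = of_int (\<Sum>r<K. if remb m r then sg K m r * I (dec m r) else 0) * P1 m"
      using rec[OF m] assms by simp
    also have "\<dots> = (\<Sum>r<K. if remb m r then of_int (sg K m r * I (dec m r)) * P1 m else 0)"
      by (simp only: of_int_sum_if sum_if_multR)
    finally show "of_int (I m) * P1 m = (\<Sum>r<K. if remb m r then of_int (sg K m r * I (dec m r)) * P1 m else 0)" .
  qed
  also have "\<dots> = (\<Sum>v\<in>Par k. \<Sum>j<K. if addb v j then of_int (sg K (inc v j) j * I (dec (inc v j) j)) * P1 (inc v j) else 0)"
    using TR[of k K "\<lambda>m r. of_int (sg K m r * I (dec m r)) * P1 m"] assms by simp
  also have "\<dots> = (\<Sum>v\<in>Par k. of_int (I v) * Qf v)"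
    unfolding Qf_alt
    by (intro sum.cong refl) (simp add: sum_distrib_left algebra_simps if_distrib cong: if_cong)
  finally show ?thesis .
qed

lemma Par0: "p \<in> Par 0 \<Longrightarrow> p = (\<lambda>_. 0)"
  using Par_zero[of p 0] by auto

lemma stepC1:
  assumes "k' < K"
  shows "(\<Sum>m\<in>Par k'. of_int (I m) * R1 m) = (if 0 < k' \<and> even (k' - 1) then Fs (k' - 1) else 0)"
proof (cases k')
  case 0
  have "R1 m = 0" if "m \<in> Par 0" for m
    using Par0[OF that] unfolding R1_def remb_def by simp
  then show ?thesis using 0 by simp
next
  case (Suc k'')
  have "(\<Sum>m\<in>Par k'. of_int (I m) * R1 m) = (\<Sum>m\<in>Par (Suc k''). \<Sum>s<K. if remb m s then of_int (I m) * (of_int ((-1)^s * sg K m s) * wt (dec m s)) else 0)"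
    unfolding R1_def Suc
    by (intro sum.cong refl) (simp add: sum_distrib_left if_distrib cong: if_cong)
  also have "\<dots> = (\<Sum>r\<in>Par k''. \<Sum>i<K. if addb r i then of_int (I (inc r i)) * (of_int ((-1)^i * sg K (inc r i) i) * wt (dec (inc r i) i)) else 0)"
    using TR[of k'' K "\<lambda>m s. of_int (I m) * (of_int ((-1)^s * sg K m s) * wt (dec m s))"] assms Suc by simp
  also have "\<dots> = (\<Sum>r\<in>Par k''. wt r * of_int (J r))"
    unfolding J_def
    by (intro sum.cong refl) (simp add: of_int_sum sum_distrib_left algebra_simps if_distrib of_int_if0 cong: if_cong)
  also have "\<dots> = (\<Sum>r\<in>Par k''. wt r * of_int (if even k'' then I r else 0))"
    using J_eq assms Suc by (intro sum.cong refl) simp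
  also have "\<dots> = (if even k'' then Fs k'' else 0)"
    unfolding Fs_def by simp
  finally show ?thesis using Suc by simp
qed

lemma Rf_alt: "Rf v = (\<Sum>r<K. if remb v r then of_int ((-1)^r * sg K v r) * R1 (dec v r) else 0)"
  unfolding Rf_def R1_def
  by (intro sum.cong refl) (simp add: sum_distrib_left algebra_simps if_distrib cong: if_cong)

lemma stepC2:
  assumes "k < K"
  shows "(\<Sum>v\<in>Par k. of_int (I v) * Rf v) = 0"
proof (cases k)
  case 0
  have "Rf v = 0" if "v \<in> Par 0" for v
    using Par0[OF that] unfolding Rf_def remb_def by simp
  then show ?thesis using 0 by simp
next
  case (Suc k')
  have "(\<Sum>v\<in>Par k. of_int (I v) * Rf v) = (\<Sum>v\<in>Par (Suc k'). \<Sum>r<K. if remb v r then of_int (I v) * (of_int ((-1)^r * sg K v r) * R1 (dec v r)) else 0)"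
    unfolding Rf_alt Suc
    by (intro sum.cong refl) (simp add: sum_distrib_left if_distrib cong: if_cong)
  also have "\<dots> = (\<Sum>m\<in>Par k'. \<Sum>i<K. if addb m i then of_int (I (inc m i)) * (of_int ((-1)^i * sg K (inc m i) i) * R1 (dec (inc m i) i)) else 0)"
    using TR[of k' K "\<lambda>v r. of_int (I v) * (of_int ((-1)^r * sg K v r) * R1 (dec v r))"] assms Suc by simp
  also have "\<dots> = (\<Sum>m\<in>Par k'. of_int (J m) * R1 m)"
    unfolding J_def
    by (intro sum.cong refl) (simp only: of_int_sum_if sum_if_multR, intro sum.cong refl, simp add: algebra_simps)
  also have "\<dots> = (\<Sum>m\<in>Par k'. of_int (if even k' then I m else 0) * R1 m)"
    using J_eq assms Suc by (intro sum.cong refl) simp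
  also have "\<dots> = (if even k' then (\<Sum>m\<in>Par k'. of_int (I m) * R1 m) else 0)"
    by simp
  also have "\<dots> = 0" using stepC1[of k'] assms Suc by (cases k') auto
  finally show ?thesis .
qed

lemma Fs_step:
  assumes "Suc (Suc k) \<le> K"
  shows "Fs (Suc (Suc k)) = (x + y) * Fs k"
proof -
  have "Fs (Suc (Suc k)) = (\<Sum>v\<in>Par k. of_int (I v) * Qf v)"
    using stepA[OF assms] stepB[of k] assms by simp
  also have "\<dots> = (\<Sum>v\<in>Par k. (x + y) * (wt v * of_int (I v)) + kap * (of_int (I v) * Rf v))"
    using local_id assms by (intro sum.cong refl) (simp add: algebra_simps)
  also have "\<dots> = (x + y) * Fs k + kap * (\<Sum>v\<in>Par k. of_int (I v) * Rf v)"
    unfolding Fs_def by (simp add: sum.distrib sum_distrib_left)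
  also have "\<dots> = (x + y) * Fs k" using stepC2[of k] assms by simp
  finally show ?thesis .
qed

lemma G0: "G i 0 = 1" unfolding G_def by simp

lemma wt0: "wt (\<lambda>_. 0) = 1"
  unfolding wt_def using G0 by simp

lemma Fs0: "Fs 0 = 1"
proof -
  have "Par 0 = {\<lambda>_. 0}" unfolding Par_def by auto
  then show ?thesis unfolding Fs_def using wt0 base by simp
qed

lemma Fs1: assumes "1 \<le> K" shows "Fs 1 = 1"
proof -
  define d where "d = (\<lambda>i::nat. if i = 0 then 1 else (0::nat))"
  have P: "Par 1 = {d}"
  proof
    show "Par 1 \<subseteq> {d}"
    proof
      fix p assume p: "p \<in> Par 1"
      have "p 0 = 1" using Par_sum[OF p] by simp
      then have "p = d" using Par_zero[OF p] unfolding d_def by (auto simp: fun_eq_iff)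
      then show "p \<in> {d}" by simp
    qed
    show "{d} \<subseteq> Par 1" unfolding Par_def d_def by auto
  qed
  have dP: "d \<in> Par (Suc 0)" using P by simp
  have "I d = (\<Sum>r<K. if remb d r then sg K d r * I (dec d r) else 0)"
    using rec[OF dP] assms by simp
  also have "\<dots> = (\<Sum>r<K. if r = 0 then sg K d 0 * I (dec d 0) else 0)"
    by (intro sum.cong refl) (auto simp: remb_def d_def)
  also have "\<dots> = sg K d 0 * I (dec d 0)" using assms by simp
  also have "dec d 0 = (\<lambda>_. 0)" unfolding dec_def d_def by auto
  also have "sg K d 0 = 1" unfolding sg_def d_def by simp
  finally have Id: "I d = 1" using base by simp
  have "wt d = (\<Prod>i<K. G i (d i))" unfolding wt_def by simp
  also have "\<dots> = 1" using G0 unfolding d_def by (intro prod.neutral) (auto simp: G_def)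
  finally show ?thesis unfolding Fs_def P using Id by simp
qed

lemma Fs_main: "m \<le> K \<Longrightarrow> 1 \<le> K \<Longrightarrow> Fs m = (x + y) ^ (m div 2)"
proof (induction m rule: less_induct)
  case (less m)
  show ?case
  proof (cases m)
    case 0 then show ?thesis using Fs0 by simp
  next
    case (Suc m')
    show ?thesis
    proof (cases m')
      case 0 then show ?thesis using Fs1 less Suc by simp
    next
      case (Suc k)
      have "Fs m = (x + y) * Fs k" using Fs_step[of k] less.prems \<open>m = Suc m'\<close> Suc by simp
      also have "Fs k = (x + y) ^ (k div 2)" using less.IH[of k] less.prems \<open>m = Suc m'\<close> Suc by simp
      finally show ?thesis using \<open>m = Suc m'\<close> Suc by simp
    qed
  qed
qed

end


lemma word_perm_permutes:
  assumes "distinct w" "set w = {1..length w}"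
  shows "word_perm w permutes {1..length w}"
proof (rule bij_imp_permutes)
  let ?N = "length w"
  have inj: "inj_on (word_perm w) {1..?N}"
  proof (rule inj_onI)
    fix a b assume a: "a \<in> {1..?N}" and b: "b \<in> {1..?N}" and e: "word_perm w a = word_perm w b"
    then have "w ! (a - 1) = w ! (b - 1)" unfolding word_perm_def by simp
    moreover have "a - 1 < length w" "b - 1 < length w" using a b by auto
    ultimately have "a - 1 = b - 1" using assms(1) nth_eq_iff_index_eq[of w "a - 1" "b - 1"] by simp
    then show "a = b" using a b by (simp add: le_simps) linarith
  qed
  have img: "word_perm w ` {1..?N} = {1..?N}"
  proof
    show "word_perm w ` {1..?N} \<subseteq> {1..?N}"
    proof
      fix z assume "z \<in> word_perm w ` {1..?N}"
      then obtain k where k: "k \<in> {1..?N}" "z = word_perm w k" by blast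
      then have "z = w ! (k - 1)" unfolding word_perm_def by simp
      moreover have "k - 1 < length w" using k by auto
      ultimately have "z \<in> set w" by simp
      then show "z \<in> {1..?N}" using assms(2) by simp
    qed
    show "{1..?N} \<subseteq> word_perm w ` {1..?N}"
    proof
      fix z assume "z \<in> {1..?N}"
      then have "z \<in> set w" using assms(2) by simp
      then obtain i where i: "i < ?N" "w ! i = z" by (auto simp: in_set_conv_nth)
      then have "word_perm w (Suc i) = z" unfolding word_perm_def by simp
      moreover have "Suc i \<in> {1..?N}" using i by simp
      ultimately show "z \<in> word_perm w ` {1..?N}" by blast
    qed
  qed
  show "bij_betw (word_perm w) {1..?N} {1..?N}" using inj img unfolding bij_betw_def by simp
  show "\<And>x. x \<notin> {1..?N} \<Longrightarrow> word_perm w x = x" unfolding word_perm_def by auto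
qed

lemma word_perm_permutation:
  "distinct w \<Longrightarrow> set w = {1..length w} \<Longrightarrow> permutation (word_perm w)"
  using word_perm_permutes permutation_permutes by blast

lemma word_perm_swap:
  "word_perm (A @ b # a # C) = word_perm (A @ a # b # C) \<circ> transpose (Suc (length A)) (Suc (Suc (length A)))"
proof (rule ext)
  fix k
  let ?L = "length A"
  show "word_perm (A @ b # a # C) k = (word_perm (A @ a # b # C) \<circ> transpose (Suc ?L) (Suc (Suc ?L))) k"
  proof (cases "k = Suc ?L")
    case True then show ?thesis unfolding word_perm_def by (simp add: nth_append)
  next
    case False
    note f1 = False
    show ?thesis
    proof (cases "k = Suc (Suc ?L)")
      case True then show ?thesis unfolding word_perm_def by (simp add: nth_append)
    next
      case False
      then show ?thesis using f1 unfolding word_perm_def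
        by (auto simp: nth_append nth_Cons' transpose_apply_other)
    qed
  qed
qed

lemma word_perm_snoc:
  "word_perm (A @ [Suc (length A)]) = word_perm A"
  unfolding word_perm_def by (rule ext) (auto simp: nth_append)

lemma sign_move:
  assumes "distinct (A @ C)" "set (A @ C) = {1..length (A @ C)}"
  shows "sign (word_perm (A @ Suc (length (A @ C)) # C)) = (-1)^(length C) * sign (word_perm (A @ C))"
  using assms
proof (induction C arbitrary: A)
  case Nil
  then show ?case using word_perm_snoc[of A] by simp
next
  case (Cons c C)
  let ?m = "Suc (length (A @ c # C))"
  have IH: "sign (word_perm ((A @ [c]) @ ?m # C)) = (-1)^(length C) * sign (word_perm ((A @ [c]) @ C))"
    using Cons.IH[of "A @ [c]"] Cons.prems by simp
  have mnot: "?m \<notin> set (A @ c # C)" using Cons.prems(2) by auto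
  have d2: "distinct (A @ c # ?m # C)" using Cons.prems(1) mnot by auto
  have s2: "set (A @ c # ?m # C) = {1..length (A @ c # ?m # C)}"
    using Cons.prems(2) by (auto simp: atLeastAtMostSuc_conv)
  have perm: "permutation (word_perm (A @ c # ?m # C))" using word_perm_permutation[OF d2 s2] .
  have "word_perm (A @ ?m # c # C) = word_perm (A @ c # ?m # C) \<circ> transpose (Suc (length A)) (Suc (Suc (length A)))"
    by (rule word_perm_swap)
  moreover have "sign (transpose (Suc (length A)) (Suc (Suc (length A)))) = (-1::int)"
    by (simp add: sign_swap_id)
  ultimately have "sign (word_perm (A @ ?m # c # C)) = - sign (word_perm (A @ c # ?m # C))"
    using sign_compose[OF perm permutation_swap_id, of "Suc (length A)" "Suc (Suc (length A))"] by simp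
  then show ?case using IH by simp
qed


definition cl :: "nat \<Rightarrow> (nat \<Rightarrow> nat) \<Rightarrow> (nat \<times> nat) list" where
  "cl n L = concat (map (\<lambda>i. map (\<lambda>j. (i, j)) [0..<L i]) [0..<n])"

lemma cl_props: "distinct (cl n L) \<and> set (cl n L) = {(i, j). i < n \<and> j < L i}"
proof (induction n)
  case 0 then show ?case by (simp add: cl_def)
next
  case (Suc n)
  have e: "cl (Suc n) L = cl n L @ map (\<lambda>j. (n, j)) [0..<L n]" by (simp add: cl_def)
  have d: "distinct (map (\<lambda>j. (n, j)) [0..<L n])" by (simp add: distinct_map inj_on_def)
  have disj: "set (cl n L) \<inter> set (map (\<lambda>j. (n, j)) [0..<L n]) = {}" using Suc by auto
  show ?case using Suc d disj unfolding e by (auto simp: less_Suc_eq)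
qed

lemma rw_map: "reading_word mu T = map T (cl (length mu) (\<lambda>i. mu ! i))"
  unfolding reading_word_def cl_def by (simp add: map_concat comp_def)

lemma cells_cl: "cells mu = set (cl (length mu) (\<lambda>i. mu ! i))"
  using cl_props unfolding cells_def by auto

lemma finite_cells: "finite (cells mu)"
  using cells_cl by simp

lemma rw_props:
  assumes "T \<in> SYT mu"
  shows "distinct (reading_word mu T) \<and> set (reading_word mu T) = {1..sum_list mu}
    \<and> length (reading_word mu T) = sum_list mu"
proof -
  have b: "bij_betw T (cells mu) {1..sum_list mu}" using assms unfolding SYT_def by blast
  then have inj: "inj_on T (set (cl (length mu) (\<lambda>i. mu ! i)))" using cells_cl unfolding bij_betw_def by simp
  have d: "distinct (reading_word mu T)" unfolding rw_map using cl_props inj by (simp add: distinct_map)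
  have s: "set (reading_word mu T) = {1..sum_list mu}" unfolding rw_map using b cells_cl unfolding bij_betw_def by simp
  have "length (reading_word mu T) = card {1..sum_list mu}" using distinct_card[OF d] s by simp
  then show ?thesis using d s by simp
qed

lemma finite_SYT: "finite (SYT mu)"
proof -
  let ?f = "\<lambda>T. restrict T (cells mu)"
  have inj: "inj_on ?f (SYT mu)"
  proof (rule inj_onI)
    fix T1 T2 assume t1: "T1 \<in> SYT mu" and t2: "T2 \<in> SYT mu" and e: "?f T1 = ?f T2"
    show "T1 = T2"
    proof
      fix c show "T1 c = T2 c"
      proof (cases "c \<in> cells mu")
        case True then show ?thesis using e by (metis restrict_apply')
      next
        case False then show ?thesis using t1 t2 unfolding SYT_def by (cases c) auto
      qed
    qed
  qed
  have "?f ` SYT mu \<subseteq> Pi\<^sub>E (cells mu) (\<lambda>_. {1..sum_list mu})"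
    unfolding SYT_def bij_betw_def by auto
  moreover have "finite (Pi\<^sub>E (cells mu) (\<lambda>_. {1..sum_list mu}))"
    using finite_cells by (intro finite_PiE) auto
  ultimately show ?thesis using finite_imageD[OF _ inj] finite_subset by blast
qed

lemma SYT_D:
  assumes "T \<in> SYT mu"
  shows "bij_betw T (cells mu) {1..sum_list mu}" "\<forall>c. c \<notin> cells mu \<longrightarrow> T c = 0"
    "\<forall>i j. (i, Suc j) \<in> cells mu \<longrightarrow> T (i, j) < T (i, Suc j)"
    "\<forall>i j. (Suc i, j) \<in> cells mu \<longrightarrow> T (i, j) < T (Suc i, j)"
  using assms unfolding SYT_def by simp_all

lemma SYT_I:
  assumes "bij_betw T (cells mu) {1..sum_list mu}" "\<forall>c. c \<notin> cells mu \<longrightarrow> T c = 0"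
    "\<forall>i j. (i, Suc j) \<in> cells mu \<longrightarrow> T (i, j) < T (i, Suc j)"
    "\<forall>i j. (Suc i, j) \<in> cells mu \<longrightarrow> T (i, j) < T (Suc i, j)"
  shows "T \<in> SYT mu"
  using assms unfolding SYT_def by simp

lemma bij_upd:
  assumes "bij_betw f A B" "a \<notin> A" "b \<notin> B"
  shows "bij_betw (f(a := b)) (insert a A) (insert b B)"
proof -
  have "bij_betw (f(a := b)) A B = bij_betw f A B" by (rule bij_betw_cong) (use assms(2) in auto)
  then have "bij_betw (f(a := b)) A B" using assms(1) by simp
  moreover have "bij_betw (f(a := b)) {a} {b}" by simp
  ultimately have "bij_betw (f(a := b)) (A \<union> {a}) (B \<union> {b})" using assms(3) by (intro bij_betw_combine) auto
  then show ?thesis by simp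
qed

context
  fixes lam :: "nat list"
  assumes srt: "sorted_wrt (\<ge>) lam"
begin

definition rm :: "nat \<Rightarrow> bool" where
  "rm r \<longleftrightarrow> r < length lam \<and> 0 < lam ! r \<and> (Suc r < length lam \<longrightarrow> lam ! Suc r < lam ! r)"
definition cr :: "nat \<Rightarrow> nat \<times> nat" where "cr r = (r, lam ! r - 1)"
definition lr :: "nat \<Rightarrow> nat list" where "lr r = lam[r := lam ! r - 1]"

lemma srt_le: "i \<le> j \<Longrightarrow> j < length lam \<Longrightarrow> lam ! j \<le> lam ! i"
  using sorted_wrt_nth_less[OF srt, of i j] by (cases "i = j") auto

lemma cells_lr: "rm r \<Longrightarrow> cells (lr r) = cells lam - {cr r}"
  unfolding cells_def lr_def cr_def rm_def by (auto simp: nth_list_update split: if_splits)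

lemma cr_in: "rm r \<Longrightarrow> cr r \<in> cells lam"
  unfolding cells_def cr_def rm_def by auto

lemma sum_lr: "rm r \<Longrightarrow> sum_list (lr r) = sum_list lam - 1"
  unfolding lr_def rm_def using sum_list_update[of r lam "lam ! r - 1"] elem_le_sum_list[of r lam] by simp

lemma ext_SYT:
  assumes r: "rm r" and T': "T' \<in> SYT (lr r)"
  shows "T'(cr r := sum_list lam) \<in> SYT lam"
proof -
  let ?m = "sum_list lam" and ?c = "cr r" and ?T = "T'(cr r := sum_list lam)"
  have mpos: "0 < ?m" using r elem_le_sum_list[of r lam] unfolding rm_def by simp
  have cl: "cells (lr r) = cells lam - {?c}" using cells_lr[OF r] .
  have b0: "bij_betw T' (cells (lr r)) {1..sum_list (lr r)}" and z0: "\<forall>c. c \<notin> cells (lr r) \<longrightarrow> T' c = 0"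
    and row0: "\<forall>i j. (i, Suc j) \<in> cells (lr r) \<longrightarrow> T' (i, j) < T' (i, Suc j)"
    and col0: "\<forall>i j. (Suc i, j) \<in> cells (lr r) \<longrightarrow> T' (i, j) < T' (Suc i, j)"
    using SYT_D[OF T'] by blast+
  have b': "bij_betw T' (cells lam - {?c}) {1..?m - 1}" using b0 sum_lr[OF r] cl by simp
  have z': "T' c = 0" if "c \<notin> cells lam - {?c}" for c
  proof -
    have "c \<notin> cells (lr r)" using that cl by simp
    then show ?thesis using z0 by (cases c) simp
  qed
  have row': "\<And>i j. (i, Suc j) \<in> cells lam - {?c} \<Longrightarrow> T' (i, j) < T' (i, Suc j)" using row0 cl by simp
  have col': "\<And>i j. (Suc i, j) \<in> cells lam - {?c} \<Longrightarrow> T' (i, j) < T' (Suc i, j)" using col0 cl by simp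
  have val: "T' c < ?m" if "c \<in> cells lam - {?c}" for c
  proof -
    have "T' c \<in> T' ` (cells lam - {?c})" using that by blast
    then have "T' c \<in> {1..?m - 1}" using b' unfolding bij_betw_def by simp
    then show ?thesis using mpos by (simp add: le_diff_conv2)
  qed
  have "bij_betw ?T (insert ?c (cells lam - {?c})) (insert ?m {1..?m - 1})"
    by (rule bij_upd[OF b']) auto
  moreover have "insert ?c (cells lam - {?c}) = cells lam" using cr_in[OF r] by auto
  moreover have "insert ?m {1..?m - 1} = {1..?m}" using mpos by auto
  ultimately have b: "bij_betw ?T (cells lam) {1..?m}" by simp
  have z: "\<forall>c. c \<notin> cells lam \<longrightarrow> ?T c = 0" using z' cr_in[OF r] by auto
  have row: "\<forall>i j. (i, Suc j) \<in> cells lam \<longrightarrow> ?T (i, j) < ?T (i, Suc j)"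
  proof (intro allI impI)
    fix i j assume a: "(i, Suc j) \<in> cells lam"
    show "?T (i, j) < ?T (i, Suc j)"
    proof (cases "(i, Suc j) = ?c")
      case True
      then have "(i, j) \<in> cells lam - {?c}" using a unfolding cr_def cells_def by auto
      then show ?thesis using True val by auto
    next
      case False
      have "(i, j) \<noteq> ?c" using a unfolding cr_def cells_def by auto
      then show ?thesis using False a row' by auto
    qed
  qed
  have col: "\<forall>i j. (Suc i, j) \<in> cells lam \<longrightarrow> ?T (i, j) < ?T (Suc i, j)"
  proof (intro allI impI)
    fix i j assume a: "(Suc i, j) \<in> cells lam"
    show "?T (i, j) < ?T (Suc i, j)"
    proof (cases "(Suc i, j) = ?c")
      case True
      then have ri: "r = Suc i" "j = lam ! r - 1" unfolding cr_def by auto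
      have "lam ! r \<le> lam ! i" using srt_le[of i r] r ri unfolding rm_def by simp
      then have "(i, j) \<in> cells lam - {?c}" using ri r unfolding cr_def cells_def rm_def by auto
      then show ?thesis using True val by auto
    next
      case False
      have "(i, j) \<noteq> ?c"
      proof
        assume "(i, j) = ?c"
        then have "i = r" "j = lam ! r - 1" unfolding cr_def by auto
        then show False using a r unfolding cells_def rm_def by auto
      qed
      then show ?thesis using False a col' by auto
    qed
  qed
  show ?thesis using b z row col by (rule SYT_I)
qed

lemma res_SYT:
  assumes T: "T \<in> SYT lam" and mpos: "0 < sum_list lam"
  shows "\<exists>r. rm r \<and> T (cr r) = sum_list lam \<and> T(cr r := 0) \<in> SYT (lr r)"
proof -
  let ?m = "sum_list lam"
  have b: "bij_betw T (cells lam) {1..?m}" and z: "\<forall>c. c \<notin> cells lam \<longrightarrow> T c = 0"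
    and row: "\<forall>i j. (i, Suc j) \<in> cells lam \<longrightarrow> T (i, j) < T (i, Suc j)"
    and col: "\<forall>i j. (Suc i, j) \<in> cells lam \<longrightarrow> T (i, j) < T (Suc i, j)"
    using SYT_D[OF T] by blast+
  have "?m \<in> T ` cells lam" using b mpos unfolding bij_betw_def by auto
  then obtain c0 where c0': "?m = T c0" "c0 \<in> cells lam" by (rule imageE)
  then have c0: "c0 \<in> cells lam" "T c0 = ?m" by simp_all
  obtain r j where rj: "c0 = (r, j)" by (cases c0)
  have le: "T c \<le> ?m" if "c \<in> cells lam" for c
  proof -
    have "T c \<in> {1..?m}" using b that unfolding bij_betw_def by blast
    then show ?thesis by simp
  qed
  have rl: "r < length lam" "j < lam ! r" using c0 rj unfolding cells_def by auto
  have j: "j = lam ! r - 1"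
  proof (rule ccontr)
    assume "j \<noteq> lam ! r - 1"
    then have a: "(r, Suc j) \<in> cells lam" using rl unfolding cells_def by auto
    then have "T (r, j) < T (r, Suc j)" using row by blast
    moreover have "T (r, Suc j) \<le> ?m" using le[OF a] .
    ultimately show False using c0 rj by simp
  qed
  have rmr: "rm r"
    unfolding rm_def
  proof (intro conjI impI)
    show "r < length lam" "0 < lam ! r" using rl by auto
    assume s: "Suc r < length lam"
    show "lam ! Suc r < lam ! r"
    proof (rule ccontr)
      assume "\<not> lam ! Suc r < lam ! r"
      then have a: "(Suc r, j) \<in> cells lam" using s rl unfolding cells_def by auto
      then have "T (r, j) < T (Suc r, j)" using col by blast
      moreover have "T (Suc r, j) \<le> ?m" using le[OF a] .
      ultimately show False using c0 rj by simp
    qed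
  qed
  have crr: "cr r = (r, j)" unfolding cr_def using j by simp
  let ?T' = "T(cr r := 0)"
  have cl: "cells (lr r) = cells lam - {cr r}" using cells_lr[OF rmr] .
  have "bij_betw T (cells lam - {cr r}) ({1..?m} - {?m})"
  proof (rule bij_betw_DiffI[OF b])
    show "bij_betw T {cr r} {?m}" using c0 rj crr by simp
    show "{cr r} \<subseteq> cells lam" using cr_in[OF rmr] by simp
    show "{?m} \<subseteq> {1..?m}" using mpos by simp
  qed
  moreover have "{1..?m} - {?m} = {1..?m - 1}" by auto
  ultimately have b1: "bij_betw T (cells lam - {cr r}) {1..?m - 1}" by simp
  have "bij_betw ?T' (cells lam - {cr r}) {1..?m - 1} = bij_betw T (cells lam - {cr r}) {1..?m - 1}"
    by (rule bij_betw_cong) simp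
  then have b': "bij_betw ?T' (cells (lr r)) {1..sum_list (lr r)}"
    using b1 cl sum_lr[OF rmr] by simp
  have nc: "(i, j') \<noteq> cr r" if "(i, Suc j') \<in> cells (lr r)" for i j'
  proof
    assume "(i, j') = cr r"
    then have "i = r" "j' = lam ! r - 1" unfolding cr_def by auto
    then show False using that unfolding cells_def lr_def by auto
  qed
  have nc2: "(i, j') \<noteq> cr r" if "(Suc i, j') \<in> cells (lr r)" for i j'
  proof
    assume "(i, j') = cr r"
    then have "i = r" "j' = lam ! r - 1" unfolding cr_def by auto
    then show False using that rmr unfolding cells_def lr_def rm_def by (auto simp: nth_list_update split: if_splits)
  qed
  have "?T' \<in> SYT (lr r)"
  proof (rule SYT_I[OF b'])
    show "\<forall>c. c \<notin> cells (lr r) \<longrightarrow> ?T' c = 0"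
    proof (intro allI impI)
      fix c assume "c \<notin> cells (lr r)"
      then have "c = cr r \<or> c \<notin> cells lam" unfolding cl by blast
      then show "?T' c = 0" using z by (cases c) auto
    qed
    show "\<forall>i j. (i, Suc j) \<in> cells (lr r) \<longrightarrow> ?T' (i, j) < ?T' (i, Suc j)"
    proof (intro allI impI)
      fix i j' assume a: "(i, Suc j') \<in> cells (lr r)"
      have "(i, Suc j') \<in> cells lam" "(i, Suc j') \<noteq> cr r" using a unfolding cl by auto
      then show "?T' (i, j') < ?T' (i, Suc j')" using row nc[OF a] by simp
    qed
    show "\<forall>i j. (Suc i, j) \<in> cells (lr r) \<longrightarrow> ?T' (i, j) < ?T' (Suc i, j)"
    proof (intro allI impI)
      fix i j' assume a: "(Suc i, j') \<in> cells (lr r)"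
      have "(Suc i, j') \<in> cells lam" "(Suc i, j') \<noteq> cr r" using a unfolding cl by auto
      then show "?T' (i, j') < ?T' (Suc i, j')" using col nc2[OF a] by simp
    qed
  qed
  moreover have "T (cr r) = ?m" using c0 rj crr by simp
  ultimately show ?thesis using rmr by blast
qed

lemma SYT_union:
  assumes "0 < sum_list lam"
  shows "SYT lam = (\<Union>r\<in>{r. rm r}. (\<lambda>T'. T'(cr r := sum_list lam)) ` SYT (lr r))"
proof
  show "SYT lam \<subseteq> (\<Union>r\<in>{r. rm r}. (\<lambda>T'. T'(cr r := sum_list lam)) ` SYT (lr r))"
  proof
    fix T assume T: "T \<in> SYT lam"
    obtain r where r: "rm r" "T (cr r) = sum_list lam" "T(cr r := 0) \<in> SYT (lr r)"
      using res_SYT[OF T assms] by blast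
    have "T = (T(cr r := 0))(cr r := sum_list lam)" using r(2) by auto
    then show "T \<in> (\<Union>r\<in>{r. rm r}. (\<lambda>T'. T'(cr r := sum_list lam)) ` SYT (lr r))"
      using r by blast
  qed
  show "(\<Union>r\<in>{r. rm r}. (\<lambda>T'. T'(cr r := sum_list lam)) ` SYT (lr r)) \<subseteq> SYT lam"
    using ext_SYT by auto
qed

end


lemma drop_map_nth: "drop k xs = map (\<lambda>i. xs ! i) [k..<length xs]"
  by (rule nth_equalityI) auto

lemma SI_zero:
  assumes "sum_list lam = 0"
  shows "sign_imbalance lam = 1"
proof -
  have z: "\<forall>i<length lam. lam ! i = 0" using assms by (simp add: sum_list_eq_0_iff)
  then have c: "cells lam = {}" unfolding cells_def by auto
  have "SYT lam = {\<lambda>_. 0}"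
  proof
    show "SYT lam \<subseteq> {\<lambda>_. 0}"
    proof
      fix T assume "T \<in> SYT lam"
      then have "\<forall>c. T c = 0" using SYT_D(2)[of T lam] c by simp
      then show "T \<in> {\<lambda>_. 0}" by auto
    qed
    show "{\<lambda>_. 0} \<subseteq> SYT lam"
      using c assms by (auto intro!: SYT_I simp: bij_betw_def)
  qed
  moreover have "reading_word lam (\<lambda>_. 0) = []"
    unfolding reading_word_def using z by (auto intro!: concat_eq_Nil_conv[THEN iffD2])
  moreover have "word_perm [] = (\<lambda>k. k)" unfolding word_perm_def by auto
  ultimately show ?thesis unfolding sign_imbalance_def tableau_sign_def by simp
qed

context
  fixes lam :: "nat list"
  assumes srt: "sorted_wrt (\<ge>) lam"
begin

lemma sign_ext:
  assumes r: "rm lam r" and T': "T' \<in> SYT (lr lam r)"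
  shows "tableau_sign lam (T'(cr lam r := sum_list lam))
       = (-1)^(sum_list (drop (Suc r) lam)) * tableau_sign (lr lam r) T'"
proof -
  let ?m = "sum_list lam" and ?T = "T'(cr lam r := sum_list lam)" and ?n = "length lam"
  let ?l = "lr lam r"
  define R where "R mu U i = map (\<lambda>j. U (i, j)) [0..<mu ! i]" for mu :: "nat list" and U :: "nat \<times> nat \<Rightarrow> nat" and i
  have rw: "reading_word mu U = concat (map (R mu U) [0..<length mu])" for mu U
    unfolding reading_word_def R_def by simp
  have rn: "r < ?n" and rpos: "0 < lam ! r" using r unfolding rm_def[OF srt] by auto
  have len: "length ?l = ?n" unfolding lr_def[OF srt] by simp
  have sp: "[0..<?n] = [0..<r] @ r # [Suc r..<?n]"
  proof -
    have "[0..<?n] = [0..<r] @ [r..<?n]" using upt_add_eq_append[of 0 r "?n - r"] rn by simp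
    then show ?thesis using upt_conv_Cons[of r ?n] rn by simp
  qed
  have oth: "R lam ?T i = R ?l T' i" if "i \<noteq> r" for i
    using that unfolding R_def lr_def[OF srt] cr_def[OF srt] by (simp add: nth_list_update_neq)
  have lr_r: "?l ! r = lam ! r - 1" unfolding lr_def[OF srt] using rn by simp
  have rr: "R lam ?T r = R ?l T' r @ [?m]"
  proof -
    have "lam ! r = Suc (lam ! r - 1)" using rpos by simp
    then have "[0..<lam ! r] = [0..<lam ! r - 1] @ [lam ! r - 1]" by (metis upt_Suc_append zero_le)
    then show ?thesis unfolding R_def lr_r cr_def[OF srt] by simp
  qed
  have m1: "map (R lam ?T) [0..<r] = map (R ?l T') [0..<r]" using oth by simp
  have m2: "map (R lam ?T) [Suc r..<?n] = map (R ?l T') [Suc r..<?n]" using oth by simp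
  define P where "P = concat (map (R ?l T') [0..<r])"
  define Q where "Q = R ?l T' r"
  define S where "S = concat (map (R ?l T') [Suc r..<?n])"
  have "reading_word lam ?T = concat (map (R lam ?T) [0..<r]) @ R lam ?T r @ concat (map (R lam ?T) [Suc r..<?n])"
    unfolding rw sp by simp
  also have "\<dots> = (P @ Q) @ ?m # S" unfolding m1 m2 rr P_def Q_def S_def by simp
  finally have w1: "reading_word lam ?T = (P @ Q) @ ?m # S" .
  have w2: "reading_word ?l T' = (P @ Q) @ S"
    unfolding rw len sp P_def Q_def S_def by simp
  have lS: "length S = sum_list (drop (Suc r) lam)"
  proof -
    have "length S = sum_list (map (\<lambda>i. ?l ! i) [Suc r..<?n])"
      unfolding S_def R_def by (simp add: length_concat comp_def)
    also have "map (\<lambda>i. ?l ! i) [Suc r..<?n] = map (\<lambda>i. lam ! i) [Suc r..<?n]"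
      unfolding lr_def[OF srt] by (intro map_cong) auto
    finally show ?thesis by (simp add: drop_map_nth)
  qed
  have props: "distinct (reading_word ?l T') \<and> set (reading_word ?l T') = {1..sum_list ?l}
      \<and> length (reading_word ?l T') = sum_list ?l" using rw_props[OF T'] .
  have sl: "sum_list ?l = ?m - 1" using sum_lr[OF srt r] .
  have mpos: "0 < ?m" using rpos elem_le_sum_list[OF rn] by simp
  have d: "distinct ((P @ Q) @ S)" and s: "set ((P @ Q) @ S) = {1..length ((P @ Q) @ S)}"
    and lm: "Suc (length ((P @ Q) @ S)) = ?m"
    using props w2 sl mpos by auto
  have "sign (word_perm ((P @ Q) @ Suc (length ((P @ Q) @ S)) # S)) = (-1)^(length S) * sign (word_perm ((P @ Q) @ S))"
    by (rule sign_move[OF d s])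
  note sm = this
  have "tableau_sign lam ?T = sign (word_perm ((P @ Q) @ ?m # S))" unfolding tableau_sign_def w1 ..
  also have "\<dots> = sign (word_perm ((P @ Q) @ Suc (length ((P @ Q) @ S)) # S))" using lm by simp
  also have "\<dots> = (-1)^(length S) * sign (word_perm ((P @ Q) @ S))" by (rule sm)
  also have "\<dots> = (-1)^(sum_list (drop (Suc r) lam)) * tableau_sign ?l T'" unfolding tableau_sign_def w2 lS ..
  finally show ?thesis .
qed

lemma SI_rec:
  assumes mpos: "0 < sum_list lam"
  shows "sign_imbalance lam = (\<Sum>r<length lam. if rm lam r then (-1)^(sum_list (drop (Suc r) lam)) * sign_imbalance (lr lam r) else 0)"
proof -
  let ?m = "sum_list lam"
  let ?ext = "\<lambda>r T'. T'(cr lam r := ?m)"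
  let ?Rs = "{r. rm lam r}"
  have fin: "finite ?Rs" by (rule finite_subset[of _ "{..<length lam}"]) (auto simp: rm_def[OF srt])
  have disj: "\<forall>i\<in>?Rs. \<forall>j\<in>?Rs. i \<noteq> j \<longrightarrow> ?ext i ` SYT (lr lam i) \<inter> ?ext j ` SYT (lr lam j) = {}"
  proof (intro ballI impI)
    fix i j assume i: "i \<in> ?Rs" and j: "j \<in> ?Rs" and ij: "i \<noteq> j"
    show "?ext i ` SYT (lr lam i) \<inter> ?ext j ` SYT (lr lam j) = {}"
    proof (rule ccontr)
      assume "?ext i ` SYT (lr lam i) \<inter> ?ext j ` SYT (lr lam j) \<noteq> {}"
      then obtain T where Ti: "T \<in> ?ext i ` SYT (lr lam i)" and Tj: "T \<in> ?ext j ` SYT (lr lam j)" by blast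
      have TS: "T \<in> SYT lam" using Ti i ext_SYT[OF srt] by auto
      have "T (cr lam i) = ?m" using Ti by auto
      moreover have "T (cr lam j) = ?m" using Tj by auto
      moreover have "inj_on T (cells lam)" using SYT_D(1)[OF TS] unfolding bij_betw_def by simp
      ultimately have "cr lam i = cr lam j" using cr_in[OF srt] i j by (metis inj_onD mem_Collect_eq)
      then show False using ij unfolding cr_def[OF srt] by simp
    qed
  qed
  have inj: "inj_on (?ext r) (SYT (lr lam r))" if "r \<in> ?Rs" for r
  proof (rule inj_onI)
    fix T1 T2 assume t1: "T1 \<in> SYT (lr lam r)" and t2: "T2 \<in> SYT (lr lam r)" and e: "?ext r T1 = ?ext r T2"
    have nc: "cr lam r \<notin> cells (lr lam r)" using cells_lr[OF srt] that by auto
    have "T1 (cr lam r) = 0" using SYT_D(2)[OF t1] nc by blast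
    moreover have "T2 (cr lam r) = 0" using SYT_D(2)[OF t2] nc by blast
    ultimately
    show "T1 = T2" using e by (metis fun_upd_triv fun_upd_upd)
  qed
  have "sign_imbalance lam = (\<Sum>T\<in>(\<Union>r\<in>?Rs. ?ext r ` SYT (lr lam r)). tableau_sign lam T)"
    unfolding sign_imbalance_def using SYT_union[OF srt mpos] by simp
  also have "\<dots> = (\<Sum>r\<in>?Rs. \<Sum>T\<in>?ext r ` SYT (lr lam r). tableau_sign lam T)"
    by (rule sum.UNION_disjoint[OF fin _ disj]) (simp add: finite_SYT)
  also have "\<dots> = (\<Sum>r\<in>?Rs. \<Sum>T'\<in>SYT (lr lam r). tableau_sign lam (?ext r T'))"
  proof (rule sum.cong[OF refl])
    fix r assume "r \<in> ?Rs"
    show "(\<Sum>T\<in>?ext r ` SYT (lr lam r). tableau_sign lam T) = (\<Sum>T'\<in>SYT (lr lam r). tableau_sign lam (?ext r T'))"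
      using sum.reindex[OF inj[OF \<open>r \<in> ?Rs\<close>], of "tableau_sign lam"] by (simp add: comp_def)
  qed
  also have "\<dots> = (\<Sum>r\<in>?Rs. (-1)^(sum_list (drop (Suc r) lam)) * sign_imbalance (lr lam r))"
    unfolding sign_imbalance_def
    by (intro sum.cong refl) (simp add: sign_ext sum_distrib_left)
  also have "\<dots> = (\<Sum>r<length lam. if rm lam r then (-1)^(sum_list (drop (Suc r) lam)) * sign_imbalance (lr lam r) else 0)"
  proof -
    define f where "f r = (-1)^(sum_list (drop (Suc r) lam)) * sign_imbalance (lr lam r)" for r
    have eq: "?Rs = {r \<in> {..<length lam}. rm lam r}" by (auto simp: rm_def[OF srt])
    have "(\<Sum>r\<in>?Rs. f r) = (\<Sum>r\<in>{r \<in> {..<length lam}. rm lam r}. f r)" by (simp only: eq)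
    also have "\<dots> = (\<Sum>r<length lam. if rm lam r then f r else 0)" by (rule sum.inter_filter) simp
    finally show ?thesis unfolding f_def .
  qed
  finally show ?thesis .
qed

end


definition IF :: "nat \<Rightarrow> pt \<Rightarrow> int" where "IF K p = sign_imbalance (map p [0..<K])"

lemma Par_sorted: "p \<in> Par n \<Longrightarrow> sorted_wrt (\<ge>) (map p [0..<K])"
  unfolding sorted_wrt_iff_nth_less using Par_dec by auto

lemma IF_rec:
  assumes p: "p \<in> Par (Suc n)" and nK: "Suc n \<le> K"
  shows "IF K p = (\<Sum>r<K. if remb p r then sg K p r * IF K (dec p r) else 0)"
proof -
  let ?l = "map p [0..<K]"
  have srt: "sorted_wrt (\<ge>) ?l" using Par_sorted[OF p] .
  have pK: "p K = 0" using Par_zero[OF p] nK by simp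
  have "sum_list ?l = sum p {..<K}"
    by (simp add: sum_set_upt_conv_sum_list_nat[symmetric] atLeast0LessThan)
  also have "sum p {..<K} = sum p {..<Suc n}"
  proof -
    have "sum p {..<K} = sum p {..<Suc n} + sum p {Suc n..<K}"
      using nK by (metis sum.atLeastLessThan_concat lessThan_atLeast0 zero_le)
    moreover have "sum p {Suc n..<K} = 0" using Par_zero[OF p] by simp
    ultimately show ?thesis by simp
  qed
  finally have sl: "sum_list ?l = Suc n" using Par_sum[OF p] by simp
  have "IF K p = (\<Sum>r<length ?l. if rm ?l r then (-1)^(sum_list (drop (Suc r) ?l)) * sign_imbalance (lr ?l r) else 0)"
    unfolding IF_def using SI_rec[OF srt] sl by simp
  also have "\<dots> = (\<Sum>r<K. if remb p r then sg K p r * IF K (dec p r) else 0)"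
  proof (rule sum.cong)
    fix r assume "r \<in> {..<K}"
    then have rK: "r < K" by simp
    have e1: "rm ?l r \<longleftrightarrow> remb p r"
    proof (cases "Suc r < K")
      case True then show ?thesis unfolding rm_def[OF srt] remb_def using rK by auto
    next
      case False
      then have "Suc r = K" using rK by simp
      then show ?thesis unfolding rm_def[OF srt] remb_def using rK pK by auto
    qed
    have "drop (Suc r) ?l = map p [Suc r..<K]" by (simp add: drop_map)
    then have e2: "(-1::int)^(sum_list (drop (Suc r) ?l)) = sg K p r"
      unfolding sg_def by (simp add: sum_set_upt_conv_sum_list_nat[symmetric])
    have e3: "lr ?l r = map (dec p r) [0..<K]"
      unfolding lr_def[OF srt] dec_def by (rule nth_equalityI) (auto simp: nth_list_update)
    show "(if rm ?l r then (-1)^(sum_list (drop (Suc r) ?l)) * sign_imbalance (lr ?l r) else 0)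
        = (if remb p r then sg K p r * IF K (dec p r) else 0)"
      using e1 e2 e3 unfolding IF_def by simp
  qed simp
  finally show ?thesis .
qed

lemma IF_base: "IF K (\<lambda>_. 0) = 1"
  unfolding IF_def by (rule SI_zero) (simp add: sum_list_eq_0_iff)

lemma imbw_IF: "imbw K (IF K)"
  unfolding imbw_def imbw_axioms_def imb_def
  using IF_rec IF_base by blast


lemma SI_pad: "sign_imbalance (lam @ replicate k 0) = sign_imbalance lam"
proof -
  let ?l = "lam @ replicate k 0"
  have c: "cells ?l = cells lam" unfolding cells_def by (auto simp: nth_append split: if_splits)
  have s: "sum_list ?l = sum_list lam" by simp
  have S: "SYT ?l = SYT lam" unfolding SYT_def c s ..
  have rw: "reading_word ?l T = reading_word lam T" for T
  proof -
    have e1: "[0..<length ?l] = [0..<length lam] @ [length lam..<length lam + k]"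
      using upt_add_eq_append[of 0 "length lam" k] by simp
    have e2: "map (\<lambda>i. map (\<lambda>j. T (i, j)) [0..<?l ! i]) [length lam..<length lam + k] = map (\<lambda>i. []) [length lam..<length lam + k]"
      by (intro map_cong) (auto simp: nth_append)
    have e3: "map (\<lambda>i. map (\<lambda>j. T (i, j)) [0..<?l ! i]) [0..<length lam] = map (\<lambda>i. map (\<lambda>j. T (i, j)) [0..<lam ! i]) [0..<length lam]"
      by (intro map_cong) (auto simp: nth_append)
    show ?thesis unfolding reading_word_def e1 map_append concat_append e2 e3 by simp
  qed
  show ?thesis unfolding sign_imbalance_def tableau_sign_def S rw ..
qed

definition toF :: "nat list \<Rightarrow> pt" where "toF lam = (\<lambda>i. if i < length lam then lam ! i else 0)"

lemma len_le_sum: "\<forall>x\<in>set lam. 0 < (x::nat) \<Longrightarrow> length lam \<le> sum_list lam"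
  by (induction lam) auto

lemma sum_ext0: "N \<le> (M::nat) \<Longrightarrow> (\<forall>i. N \<le> i \<longrightarrow> f i = (0::'a::comm_monoid_add)) \<Longrightarrow> (\<Sum>i<M. f i) = (\<Sum>i<N. f i)"
proof (induction M)
  case 0 then show ?case by simp
next
  case (Suc M)
  show ?case
  proof (cases "N \<le> M")
    case True then show ?thesis using Suc by simp
  next
    case False then have "N = Suc M" using Suc.prems by simp
    then show ?thesis by simp
  qed
qed

lemma sum_list_nth: "sum_list lam = (\<Sum>i<length lam. lam ! i)"
  by (metis atLeast0LessThan map_nth sum_list_sum_nth)

lemma toF_Par: assumes "lam \<in> partitions m" shows "toF lam \<in> Par m"
proof -
  have srt: "sorted_wrt (\<ge>) lam" and pos: "\<forall>x\<in>set lam. 0 < x" and sm: "sum_list lam = m"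
    using assms unfolding partitions_def is_partition_def by auto
  have len: "length lam \<le> m" using len_le_sum[OF pos] sm by simp
  have mono: "\<forall>i. toF lam (Suc i) \<le> toF lam i"
    unfolding toF_def using sorted_wrt_nth_less[OF srt] by auto
  have z: "\<forall>i\<ge>m. toF lam i = 0" unfolding toF_def using len by auto
  have "sum (toF lam) {..<m} = (\<Sum>i<length lam. toF lam i)"
    by (rule sum_ext0) (use len in \<open>auto simp: toF_def\<close>)
  also have "\<dots> = (\<Sum>i<length lam. lam ! i)" unfolding toF_def by simp
  also have "\<dots> = m" using sm sum_list_nth[of lam] by simp
  finally show ?thesis using mono z unfolding Par_def by blast
qed

lemma toF_pos: "\<forall>x\<in>set lam. 0 < x \<Longrightarrow> (0 < toF lam i \<longleftrightarrow> i < length lam)"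
  unfolding toF_def by auto

lemma toF_bij: "bij_betw toF (partitions m) (Par m)"
proof -
  have inj: "inj_on toF (partitions m)"
  proof (rule inj_onI)
    fix a b assume a: "a \<in> partitions m" and b: "b \<in> partitions m" and e: "toF a = toF b"
    have pa: "\<forall>x\<in>set a. 0 < x" and pb: "\<forall>x\<in>set b. 0 < x"
      using a b unfolding partitions_def is_partition_def by auto
    have "length a = length b"
    proof -
      have "\<And>i. i < length a \<longleftrightarrow> i < length b" using toF_pos[OF pa] toF_pos[OF pb] e by metis
      then show ?thesis by (metis nat_neq_iff)
    qed
    moreover have "\<And>i. i < length a \<Longrightarrow> a ! i = b ! i"
      using e \<open>length a = length b\<close> unfolding toF_def by (metis (no_types))
    ultimately show "a = b" by (rule nth_equalityI)
  qed
  have surj: "Par m \<subseteq> toF ` partitions m"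
  proof
    fix p assume p: "p \<in> Par m"
    define l where "l = (LEAST i. p i = 0)"
    have pm: "p m = 0" using Par_zero[OF p] by simp
    have lm: "l \<le> m" unfolding l_def using pm by (rule Least_le)
    have pl: "p l = 0" unfolding l_def using pm by (rule LeastI)
    have below: "i < l \<Longrightarrow> 0 < p i" for i unfolding l_def using not_less_Least by blast
    have above: "l \<le> i \<Longrightarrow> p i = 0" for i using Par_dec[OF p, of l i] pl by simp
    define lam where "lam = map p [0..<l]"
    have "toF lam = p" unfolding toF_def lam_def using above by (auto simp: fun_eq_iff)
    moreover have "lam \<in> partitions m"
    proof -
      have "sorted_wrt (\<ge>) lam" unfolding lam_def sorted_wrt_iff_nth_less using Par_dec[OF p] by auto
      moreover have "\<forall>x\<in>set lam. 0 < x" unfolding lam_def using below by auto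
      moreover have "sum_list lam = m"
      proof -
        have "sum_list lam = sum p {..<l}"
          unfolding lam_def by (simp add: sum_set_upt_conv_sum_list_nat[symmetric] atLeast0LessThan)
        also have "\<dots> = sum p {..<m}" by (rule sum_ext0[symmetric]) (use lm above in auto)
        finally show ?thesis using Par_sum[OF p] by simp
      qed
      ultimately show ?thesis unfolding partitions_def is_partition_def by blast
    qed
    ultimately show "p \<in> toF ` partitions m" by blast
  qed
  have "toF ` partitions m \<subseteq> Par m" using toF_Par by blast
  then show ?thesis using inj surj unfolding bij_betw_def by blast
qed

lemma map_toF: assumes "lam \<in> partitions m" shows "map (toF lam) [0..<m] = lam @ replicate (m - length lam) 0"
proof -
  have pos: "\<forall>x\<in>set lam. 0 < x" and sm: "sum_list lam = m"
    using assms unfolding partitions_def is_partition_def by auto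
  have len: "length lam \<le> m" using len_le_sum[OF pos] sm by simp
  show ?thesis by (rule nth_equalityI) (use len in \<open>auto simp: toF_def nth_append\<close>)
qed


lemma filt: "sorted_wrt (\<ge>) (lam::nat list) \<Longrightarrow> i < length lam \<Longrightarrow> (j < lam ! i \<longleftrightarrow> i < length (filter (\<lambda>p. j < p) lam))"
proof (induction lam arbitrary: i)
  case Nil then show ?case by simp
next
  case (Cons a rest)
  have sr: "sorted_wrt (\<ge>) rest" and le: "\<forall>x\<in>set rest. x \<le> a" using Cons.prems(1) by auto
  show ?case
  proof (cases i)
    case 0
    show ?thesis
    proof (cases "j < a")
      case True then show ?thesis using 0 by simp
    next
      case False
      have "filter (\<lambda>p. j < p) rest = []" using le False by (auto simp: filter_empty_conv)
      then show ?thesis using 0 False by simp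
    qed
  next
    case (Suc i')
    have i': "i' < length rest" using Cons.prems(2) Suc by simp
    show ?thesis
    proof (cases "j < a")
      case True then show ?thesis using Cons.IH[OF sr i'] Suc by simp
    next
      case False
      have "filter (\<lambda>p. j < p) rest = []" using le False by (auto simp: filter_empty_conv)
      moreover have "\<not> j < rest ! i'" using le False i' nth_mem by fastforce
      ultimately show ?thesis using Suc False by simp
    qed
  qed
qed

lemma card_odd: "card {i. i < c \<and> odd i} = c div 2"
proof (induction c)
  case 0 then show ?case by simp
next
  case (Suc c)
  show ?case
  proof (cases "odd c")
    case True
    then have "{i. i < Suc c \<and> odd i} = insert c {i. i < c \<and> odd i}" by (auto simp: less_Suc_eq)
    then have "card {i. i < Suc c \<and> odd i} = Suc (c div 2)" using Suc by simp
    then show ?thesis using True by presburger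
  next
    case False
    then have "{i. i < Suc c \<and> odd i} = {i. i < c \<and> odd i}" by (auto simp: less_Suc_eq)
    then show ?thesis using Suc False by (simp; presburger)
  qed
qed

lemma card_sum: "card {i. i < (N::nat) \<and> P i} = (\<Sum>i<N. if P i then 1 else 0)"
proof -
  have "card {i. i < N \<and> P i} = card {i \<in> {..<N}. P i}" by (simp add: lessThan_def conj_commute)
  also have "\<dots> = (\<Sum>i\<in>{i \<in> {..<N}. P i}. 1)" by simp
  also have "\<dots> = (\<Sum>i<N. if P i then 1 else 0)" by (rule sum.inter_filter) simp
  finally show ?thesis .
qed

lemma cdiv:
  assumes "sorted_wrt (\<ge>) (lam::nat list)"
  shows "length (filter (\<lambda>p. j < p) lam) div 2 = card {i. i < length lam \<and> odd i \<and> j < lam ! i}"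
proof -
  let ?c = "length (filter (\<lambda>p. j < p) lam)"
  have "?c \<le> length lam" by simp
  then have "{i. i < length lam \<and> odd i \<and> j < lam ! i} = {i. i < ?c \<and> odd i}"
  proof (intro set_eqI iffI)
    fix x assume "x \<in> {i. i < length lam \<and> odd i \<and> j < lam ! i}"
    then show "x \<in> {i. i < ?c \<and> odd i}" using filt[OF assms, of x j] by auto
  next
    fix x assume x: "x \<in> {i. i < ?c \<and> odd i}"
    have "x < ?c" using x by simp
    then have "x < length lam" using length_filter_le[of "\<lambda>p. j < p" lam] by linarith
    then show "x \<in> {i. i < length lam \<and> odd i \<and> j < lam ! i}" using x filt[OF assms, of x j] by auto
  qed
  then show ?thesis using card_odd by simp
qed

lemma conj_nth: "lam \<noteq> [] \<Longrightarrow> j < hd lam \<Longrightarrow> conj_part lam ! j = length (filter (\<lambda>p. j < p) lam)"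
  unfolding conj_part_def by simp

lemma conj_len: "lam \<noteq> [] \<Longrightarrow> length (conj_part lam) = hd lam"
  unfolding conj_part_def by simp

lemma le_hd: assumes "sorted_wrt (\<ge>) (lam::nat list)" "i < length lam" shows "lam ! i \<le> hd lam"
proof -
  have "lam \<noteq> []" using assms(2) by auto
  then have h: "hd lam = lam ! 0" by (simp add: hd_conv_nth)
  show ?thesis
  proof (cases "i = 0")
    case True then show ?thesis using h by simp
  next
    case False then show ?thesis using h sorted_wrt_nth_less[OF assms(1), of 0 i] assms(2) by simp
  qed
qed

lemma v_conj:
  assumes srt: "sorted_wrt (\<ge>) (lam::nat list)"
  shows "v_stat (conj_part lam) = (\<Sum>i<length lam. if odd i then lam ! i else 0)"
proof (cases "lam = []")
  case True then show ?thesis by (simp add: v_stat_def conj_part_def)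
next
  case False
  let ?h = "hd lam" and ?n = "length lam"
  have "v_stat (conj_part lam) = (\<Sum>j<?h. length (filter (\<lambda>p. j < p) lam) div 2)"
    unfolding v_stat_def conj_len[OF False] using conj_nth[OF False] by simp
  also have "\<dots> = (\<Sum>j<?h. \<Sum>i<?n. if odd i \<and> j < lam ! i then 1 else 0)"
    using cdiv[OF srt] card_sum by simp
  also have "\<dots> = (\<Sum>i<?n. \<Sum>j<?h. if odd i \<and> j < lam ! i then 1 else 0)" by (rule sum.swap)
  also have "\<dots> = (\<Sum>i<?n. if odd i then lam ! i else 0)"
  proof (rule sum.cong[OF refl])
    fix i assume "i \<in> {..<?n}"
    then have le: "lam ! i \<le> ?h" using le_hd[OF srt] by simp
    have "(\<Sum>j<?h. if odd i \<and> j < lam ! i then 1 else 0) = card {j. j < ?h \<and> odd i \<and> j < lam ! i}"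
      using card_sum[of ?h "\<lambda>j. odd i \<and> j < lam ! i"] by simp
    also have "{j. j < ?h \<and> odd i \<and> j < lam ! i} = (if odd i then {..<lam ! i} else {})"
      using le by auto
    finally show "(\<Sum>j<?h. if odd i \<and> j < lam ! i then 1 else 0) = (if odd i then lam ! i else 0)" by simp
  qed
  finally show ?thesis .
qed

lemma d_conj:
  assumes srt: "sorted_wrt (\<ge>) (lam::nat list)"
  shows "d_stat (conj_part lam) = (\<Sum>i<length lam. if odd i then lam ! i div 2 else 0)"
proof (cases "lam = []")
  case True then show ?thesis by (simp add: d_stat_def conj_part_def)
next
  case False
  let ?h = "hd lam" and ?n = "length lam"
  have "d_stat (conj_part lam) = (\<Sum>k\<in>{1..?h div 2}. length (filter (\<lambda>p. 2 * k - 1 < p) lam) div 2)"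
    unfolding d_stat_def conj_len[OF False]
    by (intro sum.cong refl) (auto simp: conj_nth[OF False])
  also have "\<dots> = (\<Sum>k\<in>{1..?h div 2}. \<Sum>i<?n. if odd i \<and> 2 * k - 1 < lam ! i then 1 else 0)"
    using cdiv[OF srt] card_sum by simp
  also have "\<dots> = (\<Sum>i<?n. \<Sum>k\<in>{1..?h div 2}. if odd i \<and> 2 * k - 1 < lam ! i then 1 else 0)" by (rule sum.swap)
  also have "\<dots> = (\<Sum>i<?n. if odd i then lam ! i div 2 else 0)"
  proof (rule sum.cong[OF refl])
    fix i assume "i \<in> {..<?n}"
    then have le: "lam ! i \<le> ?h" using le_hd[OF srt] by simp
    have "(\<Sum>k\<in>{1..?h div 2}. if odd i \<and> 2 * k - 1 < lam ! i then 1 else 0) = card {k \<in> {1..?h div 2}. odd i \<and> 2 * k - 1 < lam ! i}"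
      by (simp add: sum.inter_filter[symmetric])
    also have "{k \<in> {1..?h div 2}. odd i \<and> 2 * k - 1 < lam ! i} = (if odd i then {1..lam ! i div 2} else {})"
      using le by auto
    finally show "(\<Sum>k\<in>{1..?h div 2}. if odd i \<and> 2 * k - 1 < lam ! i then 1 else 0) = (if odd i then lam ! i div 2 else 0)" by simp
  qed
  finally show ?thesis .
qed

lemma d_lam: "d_stat lam = (\<Sum>i<length lam. if odd i then lam ! i div 2 else 0)"
proof -
  let ?n = "length lam"
  have "(\<Sum>i<?n. if odd i then lam ! i div 2 else 0) = (\<Sum>i\<in>{i \<in> {..<?n}. odd i}. lam ! i div 2)"
    by (rule sum.inter_filter[symmetric]) simp
  also have "\<dots> = (\<Sum>k\<in>{1..?n div 2}. lam ! (2 * k - 1) div 2)"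
    by (rule sum.reindex_bij_witness[where i = "\<lambda>k. 2 * k - 1" and j = "\<lambda>i. (i + 1) div 2"]) (auto elim!: oddE)
  finally show ?thesis unfolding d_stat_def by simp
qed


lemma wt_toF:
  fixes x y q t :: "'a::comm_ring_1"
  assumes lam: "lam \<in> partitions m"
  shows "wts.wt m x y q t (toF lam) = x ^ v_stat lam * y ^ v_stat (conj_part lam) * q ^ d_stat lam * t ^ d_stat (conj_part lam)"
proof -
  have srt: "sorted_wrt (\<ge>) lam" and pos: "\<forall>x\<in>set lam. 0 < x" and sm: "sum_list lam = m"
    using lam unfolding partitions_def is_partition_def by auto
  have len: "length lam \<le> m" using len_le_sum[OF pos] sm by simp
  let ?p = "toF lam"
  have G: "wts.G x y q t i n = x ^ (n div 2) * y ^ (if odd i then n else 0) * q ^ (if odd i then n div 2 else 0) * t ^ (if odd i then n div 2 else 0)" for i n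
    unfolding wts.G_def by simp
  have "wts.wt m x y q t ?p = (\<Prod>i<m. x ^ (?p i div 2) * y ^ (if odd i then ?p i else 0) * q ^ (if odd i then ?p i div 2 else 0) * t ^ (if odd i then ?p i div 2 else 0))"
    unfolding wts.wt_def G ..
  also have "\<dots> = x ^ (\<Sum>i<m. ?p i div 2) * y ^ (\<Sum>i<m. if odd i then ?p i else 0) * q ^ (\<Sum>i<m. if odd i then ?p i div 2 else 0) * t ^ (\<Sum>i<m. if odd i then ?p i div 2 else 0)"
    by (simp add: prod.distrib power_sum)
  also have "(\<Sum>i<m. ?p i div 2) = v_stat lam"
  proof -
    have "(\<Sum>i<m. ?p i div 2) = (\<Sum>i<length lam. ?p i div 2)" by (rule sum_ext0) (use len in \<open>auto simp: toF_def\<close>)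
    also have "\<dots> = (\<Sum>i<length lam. lam ! i div 2)" by (rule sum.cong) (auto simp: toF_def)
    finally show ?thesis unfolding v_stat_def .
  qed
  also have "(\<Sum>i<m. if odd i then ?p i else 0) = v_stat (conj_part lam)"
  proof -
    have "(\<Sum>i<m. if odd i then ?p i else 0) = (\<Sum>i<length lam. if odd i then ?p i else 0)" by (rule sum_ext0) (use len in \<open>auto simp: toF_def\<close>)
    also have "\<dots> = (\<Sum>i<length lam. if odd i then lam ! i else 0)" by (rule sum.cong) (auto simp: toF_def)
    finally show ?thesis unfolding v_conj[OF srt] .
  qed
  also have "(\<Sum>i<m. if odd i then ?p i div 2 else 0) = d_stat lam"
  proof -
    have "(\<Sum>i<m. if odd i then ?p i div 2 else 0) = (\<Sum>i<length lam. if odd i then ?p i div 2 else 0)" by (rule sum_ext0) (use len in \<open>auto simp: toF_def\<close>)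
    also have "\<dots> = (\<Sum>i<length lam. if odd i then lam ! i div 2 else 0)" by (rule sum.cong) (auto simp: toF_def)
    finally show ?thesis unfolding d_lam .
  qed
  finally show ?thesis using d_conj[OF srt] d_lam[of lam] by simp
qed

theorem theorem4p5:
  fixes m :: nat and x y q t :: "'a :: comm_ring_1"
  assumes "m \<ge> 1"
  shows "(\<Sum>lam\<in>partitions m.
            x ^ v_stat lam * y ^ v_stat (conj_part lam) * q ^ d_stat lam * t ^ d_stat (conj_part lam)
            * of_int (sign_imbalance lam)) = (x + y) ^ (m div 2)"
proof -
  interpret imbw m "IF m" x y q t by (rule imbw_IF)
  have F: "Fs m = (x + y) ^ (m div 2)" using Fs_main[of m] assms by simp
  have "(\<Sum>lam\<in>partitions m.
            x ^ v_stat lam * y ^ v_stat (conj_part lam) * q ^ d_stat lam * t ^ d_stat (conj_part lam)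
            * of_int (sign_imbalance lam)) = (\<Sum>lam\<in>partitions m. wt (toF lam) * of_int (IF m (toF lam)))"
  proof (rule sum.cong[OF refl])
    fix lam assume lam: "lam \<in> partitions m"
    have "IF m (toF lam) = sign_imbalance lam" unfolding IF_def map_toF[OF lam] SI_pad ..
    then show "x ^ v_stat lam * y ^ v_stat (conj_part lam) * q ^ d_stat lam * t ^ d_stat (conj_part lam)
            * of_int (sign_imbalance lam) = wt (toF lam) * of_int (IF m (toF lam))"
      using wt_toF[OF lam, of x y q t] by simp
  qed
  also have "\<dots> = (\<Sum>p\<in>Par m. wt p * of_int (IF m p))"
    by (rule sum.reindex_bij_betw[OF toF_bij])
  also have "\<dots> = Fs m" unfolding Fs_def ..
  finally show ?thesis using F by simp
qed


end
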